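(* Let $1\le p<d\le n$. Let $C_n(k)$ be the right $Y_n$-comodules of the context, and let $C_n(d-p;\,d-p,\,p)\subseteq C_n(d-p)\otimes C_n(p)$ be the span of the coefficients of all powers of $v^{-1}$ in the series $\tilde f_I(v+d-p)\otimes\tilde f_\Lambda(v)$, for $I\in\binom{[n]}{d-p}$ and $\Lambda\in\binom{[n]}p$. This is a subcomodule of the tensor product comodule. Let $\mu:C_n(d-p;\,d-p,\,p)\to C_n(d)$ be the map given by $$\tilde f_I(u+d-p)\otimes\tilde f_\Lambda(u)\mapsto\tilde f_{I|\Lambda}(u+d-p),$$ i.e. the coefficient of $u^{-r}$ on the left is sent to the coefficient of $u^{-r}$ on the right. Then $\mu$ is a morphism of right $Y_n$-comodules.
   Context: $Y_n$ is the Yangian: the complex associative unital algebra with generators $t^{(r)}_{ij}$ ($1\le i,j\le n$, $r\ge1$) and relations $[t_{ij}^{(r+1)},t_{kl}^{(s)}]-[t_{ij}^{(r)},t_{kl}^{(s+1)}]=t_{kj}^{(r)}t_{il}^{(s)}-t_{kj}^{(s)}t_{il}^{(r)}$ ($r,s\ge0$, $t^{(0)}_{ij}=\delta_{ij}$). Put $t_{ij}(u)=\delta_{ij}+\sum_{r\ge1}t^{(r)}_{ij}u^{-r}$, with coproduct $\Delta(t_{ij}(u))=\sum_kt_{ik}(u)\otimes t_{kj}(u)$. The Yangian minor is $$t^I_J(u)=\sum_{\sigma\in\mathfrak S_d}\operatorname{sgn}(\sigma)\,t_{i_{\sigma(1)}j_1}(u)\,t_{i_{\sigma(2)}j_2}(u-1)\cdots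 t_{i_{\sigma(d)}j_d}(u-d+1).$$ Shifts $g(u+a)$ are obtained by expanding $(u+a)^{-r}$ in powers of $u^{-1}$. $C_n(k)$ is the complex vector space spanned by $\tilde f^{(r)}_I$ ($I\in[n]^k$, $r\ge0$) modulo the coefficients of $\tilde f_{\sigma I}(u)=\operatorname{sgn}(\sigma)\tilde f_I(u)$ ($\sigma\in\mathfrak S_k$), where $\tilde f_I(u)=\sum_{r\ge0}\tilde f_I^{(r)}u^{-r}$. It is a right $Y_n$-comodule via $\rho(\tilde f_I(u))=\sum_{K\in\binom{[n]}k}\tilde f_K(u)\otimes t^K_I(u)$. Tensor products carry the structure $\rho(x\otimes y)=\sum x_{(0)}\otimes y_{(0)}\otimes x_{(1)}y_{(1)}$. $I|\Lambda$ denotes concatenation of the increasing listings of $I$ and $\Lambda$. *)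

theory Defs
  imports Complex_Main "HOL-Library.Poly_Mapping" "HOL-Combinatorics.Permutations"
begin

text \<open>Words in the generators; a generator t_ij^(r) is the triple (i,j,r).\<close>
datatype yword = YW "(nat \<times> nat \<times> nat) list"

instantiation yword :: monoid_add
begin
definition zero_yword :: yword where "zero_yword = YW []"
fun plus_yword :: "yword \<Rightarrow> yword \<Rightarrow> yword" where
  "plus_yword (YW a) (YW b) = YW (a @ b)"
instance
proof
  fix a b c :: yword
  show "a + b + c = a + (b + c)" by (cases a; cases b; cases c) auto
  show "0 + a = a" by (cases a) (simp add: zero_yword_def)
  show "a + 0 = a" by (cases a) (simp add: zero_yword_def)
qed
end

text \<open>The free associative unital complex algebra on the generators.\<close>
type_synonym fyang = "yword \<Rightarrow>\<^sub>0 complex"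

definition yconst :: "complex \<Rightarrow> fyang" where
  "yconst c = Poly_Mapping.single 0 c"

definition ygen :: "nat \<Rightarrow> nat \<Rightarrow> nat \<Rightarrow> fyang" where
  "ygen i j r = Poly_Mapping.single (YW [(i, j, r)]) 1"

definition tgen :: "nat \<Rightarrow> nat \<Rightarrow> nat \<Rightarrow> fyang" where
  "tgen i j r = (if r = 0 then (if i = j then 1 else 0) else ygen i j r)"

definition yrel :: "nat \<Rightarrow> nat \<Rightarrow> nat \<Rightarrow> nat \<Rightarrow> nat \<Rightarrow> nat \<Rightarrow> fyang" where
  "yrel i j k l r s =
     (tgen i j (Suc r) * tgen k l s - tgen k l s * tgen i j (Suc r))
   - (tgen i j r * tgen k l (Suc s) - tgen k l (Suc s) * tgen i j r)
   - (tgen k j r * tgen i l s - tgen k j s * tgen i l r)"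

text \<open>The two-sided ideal of defining relations of Y_n (generators with indices
  outside [n] or with r = 0 are not generators of Y_n and are killed).\<close>
inductive_set yideal :: "nat \<Rightarrow> fyang set" for n :: nat where
  rel: "\<lbrakk>i \<in> {1..n}; j \<in> {1..n}; k \<in> {1..n}; l \<in> {1..n}\<rbrakk> \<Longrightarrow> yrel i j k l r s \<in> yideal n"
| extra: "\<not> (i \<in> {1..n} \<and> j \<in> {1..n} \<and> r \<ge> 1) \<Longrightarrow> ygen i j r \<in> yideal n"
| zero: "0 \<in> yideal n"
| add: "\<lbrakk>a \<in> yideal n; b \<in> yideal n\<rbrakk> \<Longrightarrow> a + b \<in> yideal n"
| mult: "a \<in> yideal n \<Longrightarrow> x * a * y \<in> yideal n"

text \<open>Equality in Y_n = Y(n) of two elements of the free algebra.\<close>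
definition yeq :: "nat \<Rightarrow> fyang \<Rightarrow> fyang \<Rightarrow> bool" where
  "yeq n a b \<longleftrightarrow> a - b \<in> yideal n"

text \<open>A series g(u) = sum_r g_r u^{-r} is represented by r \<mapsto> g_r.\<close>
type_synonym yser = "nat \<Rightarrow> fyang"

definition ser_one :: yser where "ser_one m = (if m = 0 then 1 else 0)"

definition ser_mult :: "yser \<Rightarrow> yser \<Rightarrow> yser" where
  "ser_mult f g m = (\<Sum>a\<le>m. f a * g (m - a))"

definition ser_prod_list :: "yser list \<Rightarrow> yser" where
  "ser_prod_list xs = foldr ser_mult xs ser_one"

text \<open>Coefficient of u^{-m} in (u+a)^{-r}.\<close>
definition shiftcoef :: "complex \<Rightarrow> nat \<Rightarrow> nat \<Rightarrow> complex" where
  "shiftcoef a r m = (if r \<le> m then ((- of_nat r) gchoose (m - r)) * a ^ (m - r) else 0)"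

text \<open>g(u+a), expanded in powers of u^{-1}.\<close>
definition ser_shift :: "complex \<Rightarrow> yser \<Rightarrow> yser" where
  "ser_shift a f m = (\<Sum>r\<le>m. yconst (shiftcoef a r m) * f r)"

definition tser :: "nat \<Rightarrow> nat \<Rightarrow> yser" where
  "tser i j = tgen i j"

definition tminor :: "nat list \<Rightarrow> nat list \<Rightarrow> yser" where
  "tminor I J = (\<lambda>m. \<Sum>\<sigma>\<in>{\<sigma>. \<sigma> permutes {..<length J}}.
      yconst (of_int (sign \<sigma>)) *
      ser_prod_list (map (\<lambda>k. ser_shift (- of_nat k) (tser (I ! \<sigma> k) (J ! k))) [0..<length J]) m)"

text \<open>binom([n],k) as strictly increasing lists.\<close>
definition subs :: "nat \<Rightarrow> nat \<Rightarrow> nat list set" where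
  "subs n k = {K. sorted_wrt (<) K \<and> set K \<subseteq> {1..n} \<and> length K = k}"

text \<open>Basis index (K, r) of C_n(k) stands for tilde f_K^(r), K increasing.\<close>
type_synonym cidx = "nat list \<times> nat"
type_synonym cvec = "cidx \<Rightarrow>\<^sub>0 complex"
type_synonym cvec2 = "(cidx \<times> cidx) \<Rightarrow>\<^sub>0 complex"

definition ninv :: "nat list \<Rightarrow> nat" where
  "ninv xs = card {(i, j). i < j \<and> j < length xs \<and> xs ! j < xs ! i}"

text \<open>tilde f_I^(r) for an arbitrary tuple I in [n]^k, via antisymmetry.\<close>
definition fvec :: "nat list \<Rightarrow> nat \<Rightarrow> cvec" where
  "fvec I r = (if distinct I then Poly_Mapping.single (sort I, r) ((-1) ^ ninv I) else 0)"

text \<open>Coaction rho : C_n(k) \<rightarrow> C_n(k) \<otimes> Y_n; elements of C_n(k) \<otimes> Y_n are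
  given by their coordinate functions with respect to the basis of C_n(k).\<close>
definition rho :: "nat \<Rightarrow> nat \<Rightarrow> cvec \<Rightarrow> cidx \<Rightarrow> fyang" where
  "rho n k v = (\<lambda>(K, a). if K \<in> subs n k then
      (\<Sum>(J, r)\<in>Poly_Mapping.keys v. yconst (Poly_Mapping.lookup v (J, r)) * (if a \<le> r then tminor K J (r - a) else 0))
    else 0)"

text \<open>Coaction on a tensor product: rho(x \<otimes> y) = x0 \<otimes> y0 \<otimes> x1 y1.\<close>
definition rho2 :: "nat \<Rightarrow> nat \<Rightarrow> nat \<Rightarrow> cvec2 \<Rightarrow> cidx \<times> cidx \<Rightarrow> fyang" where
  "rho2 n k l w = (\<lambda>(i1, i2). \<Sum>j\<in>Poly_Mapping.keys w. yconst (Poly_Mapping.lookup w j)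
      * rho n k (Poly_Mapping.single (fst j) 1) i1 * rho n l (Poly_Mapping.single (snd j) 1) i2)"

text \<open>(M \<otimes> id) applied to a (finitely supported) element of (C \<otimes> C) \<otimes> Y_n.\<close>
definition tensor_map :: "(cvec2 \<Rightarrow> cvec) \<Rightarrow> (cidx \<times> cidx \<Rightarrow> fyang) \<Rightarrow> cidx \<Rightarrow> fyang" where
  "tensor_map M Z = (\<lambda>i. \<Sum>j\<in>{j. Z j \<noteq> 0}. yconst (Poly_Mapping.lookup (M (Poly_Mapping.single j 1)) i) * Z j)"

text \<open>Coefficient of v^{-s} in tilde f_I(v+c) \<otimes> tilde f_Lam(v).\<close>
definition gen2 :: "nat \<Rightarrow> nat list \<Rightarrow> nat list \<Rightarrow> nat \<Rightarrow> cvec2" where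
  "gen2 c I Lam s = (\<Sum>m\<le>s. \<Sum>r\<le>m.
      Poly_Mapping.single ((I, r), (Lam, s - m)) (shiftcoef (of_nat c) r m))"

text \<open>Coefficient of u^{-s} in tilde f_{I|Lam}(u+c).\<close>
definition img :: "nat \<Rightarrow> nat list \<Rightarrow> nat list \<Rightarrow> nat \<Rightarrow> cvec" where
  "img c I Lam s = (\<Sum>r\<le>s. Poly_Mapping.map ((*) (shiftcoef (of_nat c) r s)) (fvec (I @ Lam) r))"

end

theory Submission
  imports Defs "HOL-Computational_Algebra.Formal_Power_Series" "HOL-Combinatorics.Multiset_Permutations"
begin


lemma yi_add: "a \<in> yideal n \<Longrightarrow> b \<in> yideal n \<Longrightarrow> a + b \<in> yideal n"
  by (rule yideal.add)

lemma yi_mult: "a \<in> yideal n \<Longrightarrow> x * a * y \<in> yideal n"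
  by (rule yideal.mult)

lemma yi_lmult: "a \<in> yideal n \<Longrightarrow> x * a \<in> yideal n"
  using yideal.mult[of a n x 1] by simp
lemma yi_rmult: "a \<in> yideal n \<Longrightarrow> a * y \<in> yideal n"
  using yideal.mult[of a n 1 y] by (simp only: mult_1_left)

lemma yi_zero[simp]: "0 \<in> yideal n"
  by (rule yideal.zero)

lemma yi_uminus: "a \<in> yideal n \<Longrightarrow> - a \<in> yideal n"
  using yi_lmult[of a n "-1"] by (simp only: mult_minus1)

lemma yi_diff: "a \<in> yideal n \<Longrightarrow> b \<in> yideal n \<Longrightarrow> a - b \<in> yideal n"
  using yi_add[OF _ yi_uminus] by (simp only: diff_conv_add_uminus)

lemma yi_sum: "(\<And>x. x \<in> A \<Longrightarrow> f x \<in> yideal n) \<Longrightarrow> sum f A \<in> yideal n"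
proof (induction A rule: infinite_finite_induct)
  case (insert x F)
  then show ?case by (simp add: yi_add)
qed simp_all

lemma yconst_0[simp]: "yconst 0 = 0" by (simp add: yconst_def)
lemma yconst_1[simp]: "yconst 1 = 1" by (simp add: yconst_def)
lemma yconst_add: "yconst (a + b) = yconst a + yconst b" by (simp add: yconst_def single_add)
lemma yconst_diff: "yconst (a - b) = yconst a - yconst b" by (simp add: yconst_def single_diff)
lemma yconst_uminus: "yconst (- a) = - yconst a" by (simp add: yconst_def single_uminus)
lemma yconst_mult: "yconst (a * b) = yconst a * yconst b" by (simp add: yconst_def mult_single)
lemma yconst_sum: "yconst (sum f A) = (\<Sum>x\<in>A. yconst (f x))"
  by (induction A rule: infinite_finite_induct) (auto simp: yconst_add)

lemma mult_single0_right: "(p::fyang) * Poly_Mapping.single 0 s = Poly_Mapping.map (\<lambda>v. v * s) p"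
proof(transfer fixing: s)
  fix p :: "yword \<Rightarrow> complex"
  assume *: "finite {x. p x \<noteq> 0}"
  have "prod_fun p (\<lambda>k'. s when 0 = k') x = (\<lambda>k. p k * s when p k \<noteq> 0) x" for x
  proof -
    have "prod_fun p (\<lambda>k'. s when 0 = k') x = (\<Sum>l. p l * (\<Sum>q. (s when 0 = q) when x = l + q))"
      by (simp add: prod_fun_def)
    also have "\<dots> = (\<Sum>l. p l * (s when x = l))"
    proof (intro Sum_any.cong)
      fix l
      have e: "(\<lambda>q. (s when 0 = q) when x = l + q) = (\<lambda>q. if q = 0 then (s when x = l) else 0)"
        by (auto simp: fun_eq_iff when_def)
      have "(\<Sum>q. (s when 0 = q) when x = l + q) = (s when x = l)"
        by (subst e) (rule Sum_any.delta)
      then show "p l * (\<Sum>q. (s when 0 = q) when x = l + q) = p l * (s when x = l)"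
        by simp
    qed
    also have "\<dots> = (\<Sum>l. (p l * s) when x = l)"
      by (intro Sum_any.cong) (auto simp: when_def)
    also have "\<dots> = p x * s" by simp
    finally show ?thesis by (simp add: when_def)
  qed
  then show "prod_fun p (\<lambda>k'. s when 0 = k') = (\<lambda>k. p k * s when p k \<noteq> 0)"
    by (simp add: fun_eq_iff)
qed

lemma yconst_central: "yconst c * x = x * yconst c"
  unfolding yconst_def mult_single0_right mult_map_scale_conv_mult[symmetric]
proof -
  have "(\<lambda>v. v*c) = (*) c" by (rule ext) (simp add: mult.commute)
  then show "Poly_Mapping.map ((*) c) x = Poly_Mapping.map (\<lambda>v. v * c) x" by simp
qed


lemma sum_window:
  fixes f :: "nat \<Rightarrow> 'a::comm_monoid_add"
  assumes "b + N \<le> m" and "\<And>x. x \<le> m \<Longrightarrow> x < b \<or> b + N < x \<Longrightarrow> f x = 0"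
  shows "(\<Sum>x\<le>m. f x) = (\<Sum>j\<le>N. f (b + j))"
proof -
  have "(\<Sum>x\<le>m. f x) = (\<Sum>x\<in>{0+b..N+b}. f x)"
    by (rule sum.mono_neutral_right) (use assms in auto)
  also have "\<dots> = (\<Sum>j\<in>{0..N}. f (j + b))"
    by (rule sum.shift_bounds_cl_nat_ivl)
  finally show ?thesis by (simp add: atLeast0AtMost add.commute)
qed

lemma sc_zero_lt: "m < r \<Longrightarrow> shiftcoef a r m = 0"
  by (simp add: shiftcoef_def)

lemma sc_conv:
  "(\<Sum>x\<le>m. shiftcoef a b x * shiftcoef a q (m - x)) = shiftcoef a (b + q) m"
proof (cases "b + q \<le> m")
  case True
  define N where "N = m - b - q"
  have "(\<Sum>x\<le>m. shiftcoef a b x * shiftcoef a q (m - x))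
      = (\<Sum>j\<le>N. shiftcoef a b (b + j) * shiftcoef a q (m - (b + j)))"
    by (rule sum_window) (use True in \<open>auto simp: N_def shiftcoef_def\<close>)
  also have "\<dots> = (\<Sum>j\<le>N. a ^ N * (((- of_nat b) gchoose j) * ((- of_nat q) gchoose (N - j))))"
  proof (intro sum.cong refl)
    fix j assume "j \<in> {..N}"
    then have j: "j \<le> N" by simp
    have e: "m - (b + j) - q = N - j" using True by (simp add: N_def)
    have "a ^ j * a ^ (N - j) = a ^ N" using j by (simp add: power_add[symmetric])
    then show "shiftcoef a b (b + j) * shiftcoef a q (m - (b + j))
        = a ^ N * (((- of_nat b) gchoose j) * ((- of_nat q) gchoose (N - j)))"
      using True j unfolding shiftcoef_def e by (auto simp: N_def algebra_simps)
  qed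
  also have "\<dots> = a ^ N * ((- of_nat b) + (- of_nat q) gchoose N)"
  proof -
    have V: "(\<Sum>j\<le>N. ((- of_nat b) gchoose j) * ((- of_nat q) gchoose (N - j))) = ((- of_nat b) + (- of_nat q) gchoose N :: complex)"
      using gbinomial_Vandermonde[of "- of_nat b :: complex" "- of_nat q" N] by (simp only: atLeast0AtMost)
    show ?thesis by (simp only: sum_distrib_left[symmetric] V)
  qed
  also have "\<dots> = shiftcoef a (b + q) m"
    using True by (simp add: shiftcoef_def N_def algebra_simps)
  finally show ?thesis .
next
  case False
  then have "shiftcoef a b x * shiftcoef a q (m - x) = 0" if "x \<le> m" for x
    using that by (auto simp: shiftcoef_def)
  then have "(\<Sum>x\<le>m. shiftcoef a b x * shiftcoef a q (m - x)) = 0" by (intro sum.neutral) auto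
  then show ?thesis using False by (simp add: shiftcoef_def)
qed

lemma sc_comp:
  "(\<Sum>x\<le>m. shiftcoef a x m * shiftcoef b r x) = shiftcoef (a + b) r m"
proof (cases "r \<le> m")
  case True
  define N where "N = m - r"
  have "(\<Sum>x\<le>m. shiftcoef a x m * shiftcoef b r x)
      = (\<Sum>j\<le>N. shiftcoef a (r + j) m * shiftcoef b r (r + j))"
    by (rule sum_window) (use True in \<open>auto simp: N_def shiftcoef_def\<close>)
  also have "\<dots> = (\<Sum>j\<le>N. ((- of_nat r) gchoose N) * (of_nat (N choose j) * b ^ j * a ^ (N - j)))"
  proof (intro sum.cong refl)
    fix j assume "j \<in> {..N}"
    then have j: "j \<le> N" by simp
    have e: "m - (r + j) = N - j" by (simp add: N_def)
    have tri: "((- of_nat r) gchoose N) * (of_nat N gchoose j)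
        = ((- of_nat r) gchoose j) * ((- of_nat r) - of_nat j gchoose (N - j) :: complex)"
      by (rule gbinomial_trinomial_revision) (use j in simp)
    have e2: "(- of_nat r) - of_nat j = (- of_nat (r + j) :: complex)" by simp
    have s1: "shiftcoef a (r + j) m = ((- of_nat (r + j)) gchoose (N - j)) * a ^ (N - j)"
      using True j unfolding shiftcoef_def e by (simp add: N_def)
    have s2: "shiftcoef b r (r + j) = ((- of_nat r) gchoose j) * b ^ j"
      unfolding shiftcoef_def by simp
    have "shiftcoef a (r + j) m * shiftcoef b r (r + j)
        = (((- of_nat r) gchoose j) * ((- of_nat r) - of_nat j gchoose (N - j))) * (b ^ j * a ^ (N - j))"
      unfolding s1 s2 e2 by (simp only: mult_ac)
    also have "\<dots> = ((- of_nat r) gchoose N) * (of_nat N gchoose j) * (b ^ j * a ^ (N - j))"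
      by (simp only: tri)
    finally show "shiftcoef a (r + j) m * shiftcoef b r (r + j)
        = ((- of_nat r) gchoose N) * (of_nat (N choose j) * b ^ j * a ^ (N - j))"
      by (simp add: binomial_gbinomial algebra_simps)
  qed
  also have "\<dots> = ((- of_nat r) gchoose N) * (b + a) ^ N"
    by (simp add: sum_distrib_left[symmetric] binomial_ring)
  also have "\<dots> = shiftcoef (a + b) r m"
    using True by (simp add: shiftcoef_def N_def algebra_simps)
  finally show ?thesis .
next
  case False
  then have "shiftcoef a x m * shiftcoef b r x = 0" if "x \<le> m" for x
    using that by (auto simp: shiftcoef_def)
  then have "(\<Sum>x\<le>m. shiftcoef a x m * shiftcoef b r x) = 0" by (intro sum.neutral) auto
  then show ?thesis using False by (simp add: shiftcoef_def)
qed

lemma sc_zero_shift: "shiftcoef 0 r m = (if r = m then 1 else 0)"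
  by (auto simp: shiftcoef_def)

lemma sc_r0: "shiftcoef a 0 m = (if m = 0 then 1 else 0)"
  by (auto simp: shiftcoef_def gbinomial_0_left)


lemma ymove: "(yconst c * x) * (yconst d * y) = yconst (c * d) * (x * y)"
proof -
  have "(yconst c * x) * (yconst d * y) = yconst c * (x * yconst d) * y" by (simp only: mult.assoc)
  also have "\<dots> = yconst c * (yconst d * x) * y" by (simp only: yconst_central)
  also have "\<dots> = yconst (c * d) * (x * y)" by (simp only: mult.assoc yconst_mult)
  finally show ?thesis .
qed

lemma ymove2: "x * (yconst d * y) = yconst d * (x * y)"
  by (metis mult.assoc yconst_central)

lemma sum_extend_atMost:
  fixes f :: "nat \<Rightarrow> 'a::comm_monoid_add"
  assumes "k \<le> n" "\<And>x. k < x \<Longrightarrow> x \<le> n \<Longrightarrow> f x = 0"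
  shows "(\<Sum>x\<le>k. f x) = (\<Sum>x\<le>n. f x)"
  by (rule sum.mono_neutral_left) (use assms in auto)

lemma fps_nth_Abs_fps_fun[simp]: "fps_nth (Abs_fps f) = f"
  by (simp add: fun_eq_iff)

lemma ser_mult_fps: "ser_mult f g = fps_nth (Abs_fps f * Abs_fps g)"
  by (simp add: ser_mult_def fps_mult_nth atLeast0AtMost fun_eq_iff)

lemma ser_one_fps: "ser_one = fps_nth 1"
  by (simp add: ser_one_def fun_eq_iff)

lemma ser_mult_assoc: "ser_mult (ser_mult f g) h = ser_mult f (ser_mult g h)"
  by (simp add: ser_mult_fps fps_nth_inverse mult.assoc)

lemma ser_mult_one_left[simp]: "ser_mult ser_one f = f"
  by (simp add: ser_mult_fps ser_one_fps fps_nth_inverse)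

lemma ser_mult_one_right[simp]: "ser_mult f ser_one = f"
  by (simp add: ser_mult_fps ser_one_fps fps_nth_inverse)

lemma ser_mult_add_left: "ser_mult (\<lambda>m. f m + g m) h = (\<lambda>m. ser_mult f h m + ser_mult g h m)"
  by (simp add: ser_mult_def fun_eq_iff distrib_right sum.distrib)

lemma ser_mult_add_right: "ser_mult h (\<lambda>m. f m + g m) = (\<lambda>m. ser_mult h f m + ser_mult h g m)"
  by (simp add: ser_mult_def fun_eq_iff distrib_left sum.distrib)

lemma ser_mult_diff_left: "ser_mult (\<lambda>m. f m - g m) h = (\<lambda>m. ser_mult f h m - ser_mult g h m)"
  by (simp add: ser_mult_def fun_eq_iff left_diff_distrib sum_subtractf)

lemma ser_mult_diff_right: "ser_mult h (\<lambda>m. f m - g m) = (\<lambda>m. ser_mult h f m - ser_mult h g m)"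
  by (simp add: ser_mult_def fun_eq_iff right_diff_distrib sum_subtractf)

lemma ser_mult_sum_left: "ser_mult (\<lambda>m. \<Sum>x\<in>A. F x m) h = (\<lambda>m. \<Sum>x\<in>A. ser_mult (F x) h m)"
  unfolding ser_mult_def fun_eq_iff sum_distrib_right by (intro allI sum.swap)

lemma ser_mult_sum_right: "ser_mult h (\<lambda>m. \<Sum>x\<in>A. F x m) = (\<lambda>m. \<Sum>x\<in>A. ser_mult h (F x) m)"
  unfolding ser_mult_def fun_eq_iff sum_distrib_left by (intro allI sum.swap)

lemma ser_mult_scal_left: "ser_mult (\<lambda>m. yconst c * f m) g = (\<lambda>m. yconst c * ser_mult f g m)"
  by (simp add: ser_mult_def fun_eq_iff sum_distrib_left mult.assoc)

lemma ser_mult_scal_right: "ser_mult f (\<lambda>m. yconst c * g m) = (\<lambda>m. yconst c * ser_mult f g m)"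
  by (simp add: ser_mult_def fun_eq_iff sum_distrib_left ymove2)

lemma ser_mult_ideal_left: "(\<And>k. f k \<in> yideal n) \<Longrightarrow> ser_mult f g m \<in> yideal n"
  unfolding ser_mult_def by (intro yi_sum yi_rmult) auto

lemma ser_mult_ideal_right: "(\<And>k. g k \<in> yideal n) \<Longrightarrow> ser_mult f g m \<in> yideal n"
  unfolding ser_mult_def by (intro yi_sum yi_lmult) auto

lemma ser_prod_list_Cons: "ser_prod_list (x # xs) = ser_mult x (ser_prod_list xs)"
  by (simp add: ser_prod_list_def)

lemma ser_prod_list_Nil: "ser_prod_list [] = ser_one"
  by (simp add: ser_prod_list_def)

lemma ser_prod_list_append: "ser_prod_list (xs @ ys) = ser_mult (ser_prod_list xs) (ser_prod_list ys)"
  by (induction xs) (simp_all add: ser_prod_list_Cons ser_prod_list_Nil ser_mult_assoc)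

lemma ser_shift_add: "ser_shift a (\<lambda>m. f m + g m) = (\<lambda>m. ser_shift a f m + ser_shift a g m)"
  by (simp add: ser_shift_def fun_eq_iff distrib_left sum.distrib)

lemma ser_shift_diff: "ser_shift a (\<lambda>m. f m - g m) = (\<lambda>m. ser_shift a f m - ser_shift a g m)"
  by (simp add: ser_shift_def fun_eq_iff right_diff_distrib sum_subtractf)

lemma ser_shift_sum: "ser_shift a (\<lambda>m. \<Sum>x\<in>A. F x m) = (\<lambda>m. \<Sum>x\<in>A. ser_shift a (F x) m)"
  unfolding ser_shift_def fun_eq_iff sum_distrib_left by (intro allI sum.swap)

lemma yconst_swap: "yconst a * (yconst b * x) = yconst b * (yconst a * x)"
proof -
  have "yconst a * (yconst b * x) = yconst (a * b) * x" by (simp only: mult.assoc[symmetric] yconst_mult)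
  also have "\<dots> = yconst (b * a) * x" by (simp only: mult.commute)
  finally show ?thesis by (simp only: mult.assoc[symmetric] yconst_mult)
qed

lemma ser_shift_scal: "ser_shift a (\<lambda>m. yconst c * f m) = (\<lambda>m. yconst c * ser_shift a f m)"
  unfolding ser_shift_def fun_eq_iff sum_distrib_left yconst_swap[of _ c] by simp

lemma ser_shift_ideal: "(\<And>k. f k \<in> yideal n) \<Longrightarrow> ser_shift a f m \<in> yideal n"
  unfolding ser_shift_def by (intro yi_sum yi_lmult) auto

lemma ser_shift_zero: "ser_shift 0 f = f"
proof
  fix m
  have "ser_shift 0 f m = (\<Sum>r\<le>m. if r = m then f r else 0)"
    unfolding ser_shift_def sc_zero_shift by (intro sum.cong) auto
  then show "ser_shift 0 f m = f m" by simp
qed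

lemma ser_shift_one: "ser_shift a ser_one = ser_one"
proof
  fix m
  have "ser_shift a ser_one m = (\<Sum>r\<le>m. if r = 0 then yconst (shiftcoef a 0 m) else 0)"
    unfolding ser_shift_def ser_one_def by (intro sum.cong) auto
  then show "ser_shift a ser_one m = ser_one m" by (simp add: sc_r0 ser_one_def)
qed

lemma ser_shift_shift: "ser_shift a (ser_shift b f) = ser_shift (a + b) f"
proof
  fix m
  have "ser_shift a (ser_shift b f) m
      = (\<Sum>x\<le>m. yconst (shiftcoef a x m) * (\<Sum>r\<le>m. yconst (shiftcoef b r x) * f r))"
    unfolding ser_shift_def
    by (intro sum.cong refl arg_cong2[where f="(*)"] sum_extend_atMost) (auto simp: sc_zero_lt)
  also have "\<dots> = (\<Sum>x\<le>m. \<Sum>r\<le>m. yconst (shiftcoef a x m * shiftcoef b r x) * f r)"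
    by (simp only: sum_distrib_left yconst_mult mult.assoc)
  also have "\<dots> = (\<Sum>r\<le>m. \<Sum>x\<le>m. yconst (shiftcoef a x m * shiftcoef b r x) * f r)"
    by (rule sum.swap)
  also have "\<dots> = (\<Sum>r\<le>m. yconst (\<Sum>x\<le>m. shiftcoef a x m * shiftcoef b r x) * f r)"
    by (simp only: sum_distrib_right yconst_sum)
  also have "\<dots> = ser_shift (a + b) f m"
    by (simp add: sc_comp ser_shift_def)
  finally show "ser_shift a (ser_shift b f) m = ser_shift (a + b) f m" .
qed

lemma ser_shift_mult: "ser_shift a (ser_mult f g) = ser_mult (ser_shift a f) (ser_shift a g)"
proof
  fix m
  define G where "G i j = yconst (shiftcoef a (i + j) m) * (f i * g j)" for i j
  have "ser_shift a (ser_mult f g) m = (\<Sum>k\<le>m. \<Sum>i\<le>k. G i (k - i))"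
    unfolding ser_shift_def ser_mult_def G_def sum_distrib_left
    by (intro sum.cong refl) simp
  also have "\<dots> = (\<Sum>(i,j)\<in>{(i,j). i + j \<le> m}. G i j)"
    by (rule sum.triangle_reindex_eq[symmetric])
  also have "\<dots> = (\<Sum>(i,j)\<in>{..m} \<times> {..m}. G i j)"
    by (rule sum.mono_neutral_left) (auto simp: G_def shiftcoef_def split: if_splits)
  also have "\<dots> = (\<Sum>i\<le>m. \<Sum>j\<le>m. G i j)"
    by (simp add: sum.cartesian_product)
  also have "\<dots> = (\<Sum>i\<le>m. \<Sum>j\<le>m. yconst (\<Sum>x\<le>m. shiftcoef a i x * shiftcoef a j (m - x)) * (f i * g j))"
    by (simp add: G_def sc_conv)
  also have "\<dots> = (\<Sum>i\<le>m. \<Sum>j\<le>m. \<Sum>x\<le>m. yconst (shiftcoef a i x * shiftcoef a j (m - x)) * (f i * g j))"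
    by (simp only: yconst_sum sum_distrib_right)
  also have "\<dots> = (\<Sum>i\<le>m. \<Sum>x\<le>m. \<Sum>j\<le>m. yconst (shiftcoef a i x * shiftcoef a j (m - x)) * (f i * g j))"
    by (intro sum.cong refl sum.swap)
  also have "\<dots> = (\<Sum>x\<le>m. \<Sum>i\<le>m. \<Sum>j\<le>m. yconst (shiftcoef a i x * shiftcoef a j (m - x)) * (f i * g j))"
    by (rule sum.swap)
  also have "\<dots> = (\<Sum>x\<le>m. \<Sum>j\<le>m. \<Sum>i\<le>m. yconst (shiftcoef a i x * shiftcoef a j (m - x)) * (f i * g j))"
    by (intro sum.cong refl sum.swap)
  also have "\<dots> = (\<Sum>x\<le>m. (\<Sum>i\<le>m. yconst (shiftcoef a i x) * f i) * (\<Sum>j\<le>m. yconst (shiftcoef a j (m - x)) * g j))"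
    by (simp only: sum_distrib_right sum_distrib_left ymove)
  also have "\<dots> = ser_mult (ser_shift a f) (ser_shift a g) m"
    unfolding ser_mult_def ser_shift_def
    by (intro sum.cong refl arg_cong2[where f="(*)"] sum_extend_atMost[symmetric]) (auto simp: sc_zero_lt)
  finally show "ser_shift a (ser_mult f g) m = ser_mult (ser_shift a f) (ser_shift a g) m" .
qed

lemma ser_shift_prod_list: "ser_shift a (ser_prod_list xs) = ser_prod_list (map (ser_shift a) xs)"
  by (induction xs) (simp_all add: ser_prod_list_Cons ser_prod_list_Nil ser_shift_mult ser_shift_one)




definition aswap :: "'a list \<Rightarrow> nat \<Rightarrow> 'a list" where
  "aswap xs k = xs[k := xs ! Suc k, Suc k := xs ! k]"

lemma aswap_length[simp]: "length (aswap xs k) = length xs"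
  by (simp add: aswap_def)

lemma aswap_nth:
  assumes "Suc k < length xs" "i < length xs"
  shows "aswap xs k ! i = xs ! (Transposition.transpose k (Suc k) i)"
  using assms by (auto simp: aswap_def nth_list_update transpose_def)

lemma aswap_mset: "Suc k < length xs \<Longrightarrow> mset (aswap xs k) = mset xs"
  unfolding aswap_def by (rule mset_swap) auto

lemma aswap_set: "Suc k < length xs \<Longrightarrow> set (aswap xs k) = set xs"
  by (metis aswap_mset set_mset_mset)

lemma aswap_distinct: "Suc k < length xs \<Longrightarrow> distinct (aswap xs k) = distinct xs"
  by (metis aswap_mset distinct_count_atmost_1 set_mset_mset)

lemma aswap_append_left: "Suc k < length xs \<Longrightarrow> aswap xs k @ ys = aswap (xs @ ys) k"
  by (simp add: aswap_def nth_append list_update_append)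

lemma aswap_append_right: "Suc k < length ys \<Longrightarrow> xs @ aswap ys k = aswap (xs @ ys) (length xs + k)"
  by (simp add: aswap_def nth_append list_update_append)

lemma sort_mset_eq: "mset xs = mset ys \<Longrightarrow> sort xs = sort ys"
  by (rule properties_for_sort) simp_all

definition inv_set :: "nat list \<Rightarrow> (nat \<times> nat) set" where
  "inv_set xs = {(i, j). i < j \<and> j < length xs \<and> xs ! j < xs ! i}"

lemma ninv_inv_set: "ninv xs = card (inv_set xs)"
  by (simp add: ninv_def inv_set_def)

lemma finite_inv_set[simp]: "finite (inv_set xs)"
proof -
  have "inv_set xs \<subseteq> {..<length xs} \<times> {..<length xs}" by (auto simp: inv_set_def)
  then show ?thesis by (rule finite_subset) simp
qed

lemma ninv_sorted: "sorted xs \<Longrightarrow> ninv xs = 0"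
proof -
  assume s: "sorted xs"
  have "\<not> (xs ! j < xs ! i)" if "i < j" "j < length xs" for i j
    using sorted_nth_mono[OF s, of i j] that by simp
  then have "inv_set xs = {}" by (auto simp: inv_set_def)
  then show ?thesis by (simp add: ninv_inv_set)
qed

lemma ninv_aswap:
  assumes k: "Suc k < length xs" and d: "xs ! Suc k < xs ! k"
  shows "Suc (ninv (aswap xs k)) = ninv xs"
proof -
  let ?t = "Transposition.transpose k (Suc k)"
  let ?ys = "aswap xs k"
  let ?h = "\<lambda>(i, j). (?t i, ?t j)"
  have ysn: "?ys ! i = xs ! ?t i" if "i < length xs" for i using aswap_nth[OF k that] .
  have tt: "?t (?t i) = i" for i by simp
  have tl: "?t i < length xs \<longleftrightarrow> i < length xs" for i using k by (auto simp: transpose_def)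
  have tmono: "?t i < ?t j" if "i < j" "(i, j) \<noteq> (k, Suc k)" for i j
    using that by (auto simp: transpose_def)
  have img: "?h ` inv_set ?ys = inv_set xs - {(k, Suc k)}"
  proof (intro equalityI subsetI)
    fix p assume "p \<in> ?h ` inv_set ?ys"
    then obtain i j where p: "p = (?t i, ?t j)" and ij: "i < j" "j < length xs" "?ys ! j < ?ys ! i"
      by (auto simp: inv_set_def)
    have ne: "(i, j) \<noteq> (k, Suc k)"
    proof
      assume "(i, j) = (k, Suc k)"
      then show False using ij(3) d k ysn[of k] ysn[of "Suc k"] by simp
    qed
    have "?t i < ?t j" using tmono[OF ij(1) ne] .
    moreover have "?t j < length xs" using ij tl by simp
    moreover have "xs ! ?t j < xs ! ?t i" using ij ysn by simp
    moreover have "(?t i, ?t j) \<noteq> (k, Suc k)"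
      using ij(1) by (auto simp: transpose_def split: if_splits)
    ultimately show "p \<in> inv_set xs - {(k, Suc k)}" using p by (auto simp: inv_set_def)
  next
    fix p assume "p \<in> inv_set xs - {(k, Suc k)}"
    then obtain a b where p: "p = (a, b)" and ab: "a < b" "b < length xs" "xs ! b < xs ! a" "(a, b) \<noteq> (k, Suc k)"
      by (auto simp: inv_set_def)
    have "?t a < ?t b" using tmono[OF ab(1) ab(4)] .
    moreover have "?t b < length xs" using ab tl by simp
    moreover have "?ys ! ?t b < ?ys ! ?t a"
      using ab ysn tl by (simp add: tt)
    ultimately have "(?t a, ?t b) \<in> inv_set ?ys" by (auto simp: inv_set_def)
    moreover have "p = ?h (?t a, ?t b)" using p by simp
    ultimately show "p \<in> ?h ` inv_set ?ys" by blast
  qed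
  have inj: "inj_on ?h (inv_set ?ys)"
  proof (rule inj_onI)
    fix p q assume "p \<in> inv_set ?ys" "q \<in> inv_set ?ys" "?h p = ?h q"
    then show "p = q" by (cases p, cases q) (simp, metis tt)
  qed
  have mem: "(k, Suc k) \<in> inv_set xs" using k d by (simp add: inv_set_def)
  have "card (inv_set ?ys) = card (inv_set xs - {(k, Suc k)})"
    using card_image[OF inj] img by simp
  also have "\<dots> = card (inv_set xs) - 1" using mem by simp
  finally show ?thesis using mem by (simp add: ninv_inv_set) (metis Suc_pred card_gt_0_iff empty_iff finite_inv_set)
qed

definition sgnv :: "nat \<Rightarrow> 'a::ab_group_add \<Rightarrow> 'a" where
  "sgnv n x = (if even n then x else - x)"

lemma sort_sign_gen:
  fixes f :: "nat list \<Rightarrow> 'v::ab_group_add"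
  assumes Z0: "0 \<in> Z" and Zadd: "\<And>x y. x \<in> Z \<Longrightarrow> y \<in> Z \<Longrightarrow> x + y \<in> Z"
    and Zneg: "\<And>x. x \<in> Z \<Longrightarrow> - x \<in> Z"
    and hyp: "\<And>xs k. Suc k < length xs \<Longrightarrow> xs ! Suc k < xs ! k \<Longrightarrow> f (aswap xs k) + f xs \<in> Z"
  shows "f (sort xs) - sgnv (ninv xs) (f xs) \<in> Z"
proof (induction "ninv xs" arbitrary: xs rule: less_induct)
  case less
  show ?case
  proof (cases "sorted xs")
    case True
    then show ?thesis using Z0 by (simp add: ninv_sorted sorted_sort_id sgnv_def)
  next
    case False
    then obtain k where k: "Suc k < length xs" "xs ! Suc k < xs ! k"
      by (auto simp: sorted_iff_nth_Suc not_le)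
    let ?ys = "aswap xs k"
    have n: "Suc (ninv ?ys) = ninv xs" by (rule ninv_aswap[OF k])
    have s: "sort ?ys = sort xs" by (rule sort_mset_eq) (simp add: aswap_mset[OF k(1)])
    have IH: "f (sort xs) - sgnv (ninv ?ys) (f ?ys) \<in> Z"
      using less[of ?ys] n s by simp
    have H: "f ?ys + f xs \<in> Z" by (rule hyp[OF k])
    show ?thesis
    proof (cases "even (ninv ?ys)")
      case True
      have eq: "f (sort xs) - sgnv (ninv xs) (f xs) = (f (sort xs) - sgnv (ninv ?ys) (f ?ys)) + (f ?ys + f xs)"
        using True n[symmetric] by (simp add: sgnv_def)
      show ?thesis unfolding eq by (rule Zadd[OF IH H])
    next
      case False
      have eq: "f (sort xs) - sgnv (ninv xs) (f xs) = (f (sort xs) - sgnv (ninv ?ys) (f ?ys)) + - (f ?ys + f xs)"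
        using False n[symmetric] by (simp add: sgnv_def)
      show ?thesis unfolding eq by (rule Zadd[OF IH Zneg[OF H]])
    qed
  qed
qed


section \<open>Sign of a permutation via inversions\<close>

definition pof :: "nat list \<Rightarrow> nat \<Rightarrow> nat" where
  "pof xs i = (if i < length xs then xs ! i else i)"

lemma pof_permutes:
  assumes "distinct xs" "set xs = {..<length xs}"
  shows "pof xs permutes {..<length xs}"
proof (rule bij_imp_permutes)
  have "bij_betw ((!) xs) {..<length xs} {..<length xs}"
    using bij_betw_nth[OF assms(1) refl] assms(2) by simp
  then show "bij_betw (pof xs) {..<length xs} {..<length xs}"
    by (rule bij_betw_cong[THEN iffD1, rotated]) (simp add: pof_def)
  show "\<And>x. x \<notin> {..<length xs} \<Longrightarrow> pof xs x = x" by (simp add: pof_def)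
qed

lemma pof_aswap:
  assumes "Suc k < length xs"
  shows "pof (aswap xs k) = pof xs \<circ> Transposition.transpose k (Suc k)"
proof
  fix i
  show "pof (aswap xs k) i = (pof xs \<circ> Transposition.transpose k (Suc k)) i"
  proof (cases "i < length xs")
    case True
    have "Transposition.transpose k (Suc k) i < length xs" using True assms by (auto simp: transpose_def)
    then show ?thesis using True aswap_nth[OF assms True] by (simp add: pof_def)
  next
    case False
    then have "Transposition.transpose k (Suc k) i = i" using assms by (auto simp: transpose_def)
    then show ?thesis using False by (simp add: pof_def)
  qed
qed

lemma sign_ninv:
  assumes perm: "\<sigma> permutes {..<d}"
  shows "sign \<sigma> = (-1::int) ^ ninv (map \<sigma> [0..<d])"
proof -
  define f where "f xs = (if distinct xs \<and> set xs = {..<length xs} then sign (pof xs) else (0::int))" for xs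
  have G: "f (sort xs) - sgnv (ninv xs) (f xs) \<in> {0}" for xs
  proof (rule sort_sign_gen)
    fix xs :: "nat list" and k assume k: "Suc k < length xs"
    show "f (aswap xs k) + f xs \<in> {0}"
    proof (cases "distinct xs \<and> set xs = {..<length xs}")
      case True
      then have pm: "permutation (pof xs)"
        using pof_permutes[of xs] permutes_imp_permutation by blast
      have "sign (pof (aswap xs k)) = sign (pof xs) * sign (Transposition.transpose k (Suc k))"
        unfolding pof_aswap[OF k] by (rule sign_compose[OF pm permutation_swap_id])
      then show ?thesis using True k by (simp add: f_def aswap_distinct aswap_set sign_swap_id)
    next
      case False
      then show ?thesis using k by (auto simp add: f_def aswap_distinct aswap_set)
    qed
  qed auto
  let ?xs = "map \<sigma> [0..<d]"
  have inj: "inj_on \<sigma> {0..<d}" using permutes_inj_on[OF perm] .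
  have dist: "distinct ?xs" using inj by (simp add: distinct_map)
  have st: "set ?xs = {..<d}" using permutes_image[OF perm] by (simp add: atLeast0LessThan)
  have ms: "mset [0..<d] = mset ?xs"
    using set_eq_iff_mset_eq_distinct[of "[0..<d]" ?xs] dist st by (simp add: atLeast0LessThan)
  have so: "sort ?xs = [0..<d]"
    by (rule properties_for_sort[OF ms]) simp
  have p0: "pof [0..<d] = id" by (auto simp: pof_def fun_eq_iff)
  have p1: "pof ?xs = \<sigma>" using permutes_not_in[OF perm] by (auto simp: pof_def fun_eq_iff)
  have "f (sort ?xs) = 1" unfolding so f_def p0 by (simp add: atLeast0LessThan)
  moreover have "f ?xs = sign \<sigma>" using dist st p1 by (simp add: f_def)
  ultimately have "1 - sgnv (ninv ?xs) (sign \<sigma>) = 0" using G[of ?xs] by simp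
  then show ?thesis by (auto simp: sgnv_def sign_def split: if_splits)
qed

lemma ninv_map_mono:
  assumes "strict_mono_on A g" "set xs \<subseteq> A"
  shows "ninv (map g xs) = ninv xs"
proof -
  have "inv_set (map g xs) = inv_set xs"
    using assms strict_mono_on_less[OF assms(1)] by (auto simp: inv_set_def subset_iff)
  then show ?thesis by (simp add: ninv_inv_set)
qed

lemma ninv_parity_aswap:
  assumes "Suc k < length xs" "xs ! Suc k < xs ! k"
  shows "(-1::int) ^ ninv (aswap xs k) = - ((-1) ^ ninv xs)"
  using ninv_aswap[OF assms] by (metis power_Suc mult_minus1 minus_minus)

lemma sign_append_sort:
  "(-1::int) ^ ninv (sort R1 @ sort R2) = (-1) ^ ninv R1 * (-1) ^ ninv R2 * (-1) ^ ninv (R1 @ R2)"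
proof -
  define f1 where "f1 xs = (-1::int) ^ ninv (xs @ R2)" for xs
  have G1: "f1 (sort R1) - sgnv (ninv R1) (f1 R1) \<in> {0}"
  proof (rule sort_sign_gen)
    fix xs :: "nat list" and k assume k: "Suc k < length xs" "xs ! Suc k < xs ! k"
    have "aswap xs k @ R2 = aswap (xs @ R2) k" by (rule aswap_append_left[OF k(1)])
    moreover have "(-1::int) ^ ninv (aswap (xs @ R2) k) = - ((-1) ^ ninv (xs @ R2))"
      by (rule ninv_parity_aswap) (use k in \<open>simp_all add: nth_append\<close>)
    ultimately show "f1 (aswap xs k) + f1 xs \<in> {0}" by (simp add: f1_def)
  qed auto
  define f2 where "f2 ys = (-1::int) ^ ninv (sort R1 @ ys)" for ys
  have G2: "f2 (sort R2) - sgnv (ninv R2) (f2 R2) \<in> {0}"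
  proof (rule sort_sign_gen)
    fix ys :: "nat list" and k assume k: "Suc k < length ys" "ys ! Suc k < ys ! k"
    have "sort R1 @ aswap ys k = aswap (sort R1 @ ys) (length (sort R1) + k)" by (rule aswap_append_right[OF k(1)])
    moreover have "(-1::int) ^ ninv (aswap (sort R1 @ ys) (length (sort R1) + k)) = - ((-1) ^ ninv (sort R1 @ ys))"
      by (rule ninv_parity_aswap) (use k in \<open>simp_all add: nth_append\<close>)
    ultimately show "f2 (aswap ys k) + f2 ys \<in> {0}" by (simp add: f2_def)
  qed auto
  have a: "f1 (sort R1) = sgnv (ninv R1) (f1 R1)" using G1 by simp
  have b: "f2 (sort R2) = sgnv (ninv R2) (f2 R2)" using G2 by simp
  have "f2 R2 = f1 (sort R1)" by (simp add: f1_def f2_def)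
  then show ?thesis using a b by (simp add: f1_def f2_def sgnv_def)
qed




section \<open>The Yangian relation at consecutive shifts\<close>

lemma sc_step: "shiftcoef a (Suc s) (Suc q) = shiftcoef a s q - a * shiftcoef a (Suc s) q"
proof (cases "s \<le> q")
  case False
  then show ?thesis by (simp add: shiftcoef_def)
next
  case True
  then obtain N where q: "q = s + N" using le_Suc_ex by blast
  show ?thesis
  proof (cases N)
    case 0
    then show ?thesis using q by (simp add: shiftcoef_def)
  next
    case (Suc N')
    have P: "((- of_nat s :: complex) gchoose Suc N') = (- of_nat (Suc s) gchoose N') + (- of_nat (Suc s) gchoose Suc N')"
      using gbinomial_Suc_Suc[of "- of_nat (Suc s) :: complex" N'] by simp
    have e1: "shiftcoef a (Suc s) (Suc q) = (- of_nat (Suc s) gchoose Suc N') * a ^ Suc N'"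
      using q Suc by (simp add: shiftcoef_def del: of_nat_Suc)
    have e2: "shiftcoef a s q = (- of_nat s gchoose Suc N') * a ^ Suc N'"
      using q Suc by (simp add: shiftcoef_def)
    have e3: "shiftcoef a (Suc s) q = (- of_nat (Suc s) gchoose N') * a ^ N'"
      using q Suc by (simp add: shiftcoef_def del: of_nat_Suc)
    show ?thesis unfolding e1 e2 e3 P by (simp add: algebra_simps)
  qed
qed

lemma sum_rev_atMost:
  fixes f :: "nat \<Rightarrow> 'a::comm_monoid_add"
  shows "(\<Sum>x\<le>m. f x) = (\<Sum>x\<le>m. f (m - x))"
  using sum.atLeastAtMost_rev[of f 0 m] by (simp add: atLeast0AtMost)

lemma form1:
  "ser_mult f (ser_shift (-1) g) m
     = (\<Sum>r\<le>m. \<Sum>s\<le>m. yconst (shiftcoef (-1) s (m - r)) * (f r * g s))"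
proof -
  have "ser_mult f (ser_shift (-1) g) m
      = (\<Sum>r\<le>m. f r * (\<Sum>s\<le>m. yconst (shiftcoef (-1) s (m - r)) * g s))"
    unfolding ser_mult_def ser_shift_def
    by (intro sum.cong refl arg_cong2[where f="(*)"] sum_extend_atMost) (auto simp: sc_zero_lt)
  also have "\<dots> = (\<Sum>r\<le>m. \<Sum>s\<le>m. yconst (shiftcoef (-1) s (m - r)) * (f r * g s))"
    by (simp add: sum_distrib_left ymove2)
  finally show ?thesis .
qed

lemma form2:
  "ser_mult (ser_shift (-1) g) f m
     = (\<Sum>r\<le>m. \<Sum>s\<le>m. yconst (shiftcoef (-1) s (m - r)) * (g s * f r))"
proof -
  have "ser_mult (ser_shift (-1) g) f m = (\<Sum>r\<le>m. ser_shift (-1) g (m - r) * f (m - (m - r)))"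
    unfolding ser_mult_def by (rule sum_rev_atMost)
  also have "\<dots> = (\<Sum>r\<le>m. (\<Sum>s\<le>m. yconst (shiftcoef (-1) s (m - r)) * g s) * f r)"
    unfolding ser_shift_def
    by (intro sum.cong refl arg_cong2[where f="(*)"] sum_extend_atMost) (auto simp: sc_zero_lt)
  also have "\<dots> = (\<Sum>r\<le>m. \<Sum>s\<le>m. yconst (shiftcoef (-1) s (m - r)) * (g s * f r))"
    by (simp add: sum_distrib_right mult.assoc)
  finally show ?thesis .
qed

lemma tgen0_comm: "tgen i j 0 * x = x * tgen i j 0"
  by (simp add: tgen_def)

lemma shift_sum_zero:
  fixes F :: "nat \<Rightarrow> 'a::comm_monoid_add"
  assumes "F 0 = 0" "F (Suc m) = 0"
  shows "(\<Sum>r\<le>m. F (Suc r)) = (\<Sum>r\<le>m. F r)"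
proof -
  have "(\<Sum>r\<le>Suc m. F r) = F 0 + (\<Sum>r\<le>m. F (Suc r))" by (rule sum.atMost_Suc_shift)
  moreover have "(\<Sum>r\<le>Suc m. F r) = (\<Sum>r\<le>m. F r) + F (Suc m)" by simp
  ultimately show ?thesis using assms by simp
qed

lemma yang_rel0:
  assumes "i \<in> {1..n}" "j \<in> {1..n}" "k \<in> {1..n}" "l \<in> {1..n}"
  shows "ser_mult (tser i j) (ser_shift (-1) (tser k l)) m - ser_mult (ser_shift (-1) (tser k l)) (tser i j) m
        - (ser_mult (tser k j) (ser_shift (-1) (tser i l)) m - ser_mult (ser_shift (-1) (tser k j)) (tser i l) m)
        \<in> yideal n"
proof -
  define cc where "cc r s = yconst (shiftcoef (-1) s (m - r))" for r s
  define a where "a r s = tgen i j r * tgen k l s - tgen k l s * tgen i j r" for r s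
  define b where "b r s = tgen k j r * tgen i l s - tgen k j s * tgen i l r" for r s
  have a0l: "a 0 s = 0" for s by (simp add: a_def tgen0_comm)
  have a0r: "a r 0 = 0" for r by (simp add: a_def tgen0_comm)
  have E: "ser_mult (tser i j) (ser_shift (-1) (tser k l)) m - ser_mult (ser_shift (-1) (tser k l)) (tser i j) m
        - (ser_mult (tser k j) (ser_shift (-1) (tser i l)) m - ser_mult (ser_shift (-1) (tser k j)) (tser i l) m)
      = (\<Sum>r\<le>m. \<Sum>s\<le>m. cc r s * a r s) - (\<Sum>r\<le>m. \<Sum>s\<le>m. cc r s * b r s)"
    unfolding form1 form2 cc_def a_def b_def tser_def
    by (simp add: sum_subtractf right_diff_distrib)
  have A1: "(\<Sum>r\<le>m. \<Sum>s\<le>m. cc r s * a (Suc r) s) = (\<Sum>r\<le>m. \<Sum>s\<le>m. cc (r - 1) s * a r s)"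
  proof -
    define F where "F r = (\<Sum>s\<le>m. cc (r - 1) s * a r s)" for r
    have "F 0 = 0" by (simp add: F_def a0l)
    moreover have "F (Suc m) = 0"
      unfolding F_def by (rule sum.neutral) (auto simp: cc_def shiftcoef_def a0r)
    ultimately have "(\<Sum>r\<le>m. F (Suc r)) = (\<Sum>r\<le>m. F r)" by (rule shift_sum_zero)
    then show ?thesis by (simp add: F_def)
  qed
  have A2: "(\<Sum>r\<le>m. \<Sum>s\<le>m. cc r s * a r (Suc s)) = (\<Sum>r\<le>m. \<Sum>s\<le>m. cc r (s - 1) * a r s)"
  proof (rule sum.cong[OF refl])
    fix r assume r: "r \<in> {..m}"
    define G where "G s = cc r (s - 1) * a r s" for s
    have "G 0 = 0" by (simp add: G_def a0r)
    moreover have "G (Suc m) = 0"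
      using r by (cases r) (auto simp: G_def cc_def shiftcoef_def a0l)
    ultimately have "(\<Sum>s\<le>m. G (Suc s)) = (\<Sum>s\<le>m. G s)" by (rule shift_sum_zero)
    then show "(\<Sum>s\<le>m. cc r s * a r (Suc s)) = (\<Sum>s\<le>m. cc r (s - 1) * a r s)" by (simp add: G_def)
  qed
  have T: "cc r s * a r s = cc (r - 1) s * a r s - cc r (s - 1) * a r s" if "r \<le> m" for r s
  proof (cases "r = 0 \<or> s = 0")
    case True
    then show ?thesis using a0l a0r by auto
  next
    case False
    then obtain r' s' where rs: "r = Suc r'" "s = Suc s'" by (metis not0_implies_Suc)
    have mr: "m - r' = Suc (m - r)" using that rs by simp
    have "shiftcoef (-1) s (m - (r - 1)) = shiftcoef (-1) s' (m - r) + shiftcoef (-1) s (m - r)"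
      using sc_step[of "-1" s' "m - r"] rs mr by simp
    then have "cc (r - 1) s - cc r (s - 1) = cc r s"
      using rs by (simp add: cc_def yconst_add)
    then show ?thesis by (simp add: left_diff_distrib[symmetric])
  qed
  have key: "(\<Sum>r\<le>m. \<Sum>s\<le>m. cc r s * a r s)
      = (\<Sum>r\<le>m. \<Sum>s\<le>m. cc r s * a (Suc r) s) - (\<Sum>r\<le>m. \<Sum>s\<le>m. cc r s * a r (Suc s))"
  proof -
    have "(\<Sum>r\<le>m. \<Sum>s\<le>m. cc r s * a r s) = (\<Sum>r\<le>m. \<Sum>s\<le>m. cc (r - 1) s * a r s - cc r (s - 1) * a r s)"
      by (rule sum.cong[OF refl], rule sum.cong[OF refl]) (use T in auto)
    also have "\<dots> = (\<Sum>r\<le>m. \<Sum>s\<le>m. cc (r - 1) s * a r s) - (\<Sum>r\<le>m. \<Sum>s\<le>m. cc r (s - 1) * a r s)"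
      by (simp only: sum_subtractf)
    finally show ?thesis by (simp only: A1 A2)
  qed
  have "ser_mult (tser i j) (ser_shift (-1) (tser k l)) m - ser_mult (ser_shift (-1) (tser k l)) (tser i j) m
        - (ser_mult (tser k j) (ser_shift (-1) (tser i l)) m - ser_mult (ser_shift (-1) (tser k j)) (tser i l) m)
      = (\<Sum>r\<le>m. \<Sum>s\<le>m. cc r s * a (Suc r) s) - (\<Sum>r\<le>m. \<Sum>s\<le>m. cc r s * a r (Suc s))
        - (\<Sum>r\<le>m. \<Sum>s\<le>m. cc r s * b r s)"
    by (simp only: E key)
  also have "\<dots> = (\<Sum>r\<le>m. \<Sum>s\<le>m. cc r s * yrel i j k l r s)"
    unfolding yrel_def a_def b_def by (simp add: sum_subtractf right_diff_distrib)
  also have "\<dots> \<in> yideal n"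
    using assms by (intro yi_sum yi_lmult yideal.rel) auto
  finally show ?thesis .
qed


definition tF :: "nat \<Rightarrow> nat \<Rightarrow> nat \<Rightarrow> yser" where
  "tF i r c = ser_shift (- of_nat i) (tser r c)"

lemma shift_Suc: "ser_shift (- of_nat i) (ser_shift (-1) f) = ser_shift (- of_nat (Suc i)) f"
proof -
  have "(- of_nat i + -1 :: complex) = - of_nat (Suc i)" by simp
  then show ?thesis by (simp only: ser_shift_shift)
qed

lemma yang_X:
  assumes "a \<in> {1..n}" "b \<in> {1..n}" "j \<in> {1..n}" "j' \<in> {1..n}"
  shows "ser_mult (tF i a j) (tF (Suc i) b j') m - ser_mult (tF i b j) (tF (Suc i) a j') m
       + ser_mult (tF i a j') (tF (Suc i) b j) m - ser_mult (tF i b j') (tF (Suc i) a j) m \<in> yideal n"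
proof -
  define X0 where "X0 = (\<lambda>m. ser_mult (tser a j) (ser_shift (-1) (tser b j')) m
      - ser_mult (tser b j) (ser_shift (-1) (tser a j')) m
      + ser_mult (tser a j') (ser_shift (-1) (tser b j)) m
      - ser_mult (tser b j') (ser_shift (-1) (tser a j)) m)"
  have X0I: "X0 m \<in> yideal n" for m
  proof -
    have "X0 m = (ser_mult (tser a j) (ser_shift (-1) (tser b j')) m - ser_mult (ser_shift (-1) (tser b j')) (tser a j) m
        - (ser_mult (tser b j) (ser_shift (-1) (tser a j')) m - ser_mult (ser_shift (-1) (tser b j)) (tser a j') m))
      + (ser_mult (tser a j') (ser_shift (-1) (tser b j)) m - ser_mult (ser_shift (-1) (tser b j)) (tser a j') m
        - (ser_mult (tser b j') (ser_shift (-1) (tser a j)) m - ser_mult (ser_shift (-1) (tser b j')) (tser a j) m))"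
      by (simp add: X0_def algebra_simps)
    also have "\<dots> \<in> yideal n"
      by (intro yi_add yang_rel0) (use assms in auto)
    finally show ?thesis .
  qed
  have "ser_mult (tF i a j) (tF (Suc i) b j') m - ser_mult (tF i b j) (tF (Suc i) a j') m
       + ser_mult (tF i a j') (tF (Suc i) b j) m - ser_mult (tF i b j') (tF (Suc i) a j) m
      = ser_shift (- of_nat i) X0 m"
    unfolding X0_def ser_shift_diff ser_shift_add ser_shift_mult shift_Suc tF_def by simp
  also have "\<dots> \<in> yideal n" by (rule ser_shift_ideal[OF X0I])
  finally show ?thesis .
qed




section \<open>Minors as sums over row arrangements\<close>

definition tfac :: "nat list \<Rightarrow> nat list \<Rightarrow> nat \<Rightarrow> yser" where
  "tfac R J k = tF k (R ! k) (J ! k)"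

definition Pm :: "nat list \<Rightarrow> nat list \<Rightarrow> yser" where
  "Pm R J = ser_prod_list (map (tfac R J) [0..<length J])"

lemma tminor_lperms:
  assumes L: "sorted_wrt (<) L" and len: "length L = length J"
  shows "tminor L J = (\<lambda>m. \<Sum>R\<in>permutations_of_set (set L). yconst ((-1) ^ ninv R) * Pm R J m)"
proof
  fix m
  define d where "d = length J"
  define P where "P = {\<sigma>. \<sigma> permutes {..<d}}"
  define h where "h \<sigma> = map (\<lambda>k. L ! \<sigma> k) [0..<d]" for \<sigma>
  have distL: "distinct L" using L by (simp add: strict_sorted_iff)
  have lenL: "length L = d" using len by (simp add: d_def)
  have hin: "h \<sigma> \<in> permutations_of_set (set L)" if "\<sigma> \<in> P" for \<sigma>
  proof -
    have perm: "\<sigma> permutes {..<d}" using that by (simp add: P_def)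
    have "set (h \<sigma>) = (\<lambda>k. L ! k) ` (\<sigma> ` {..<d})" by (auto simp: h_def image_image atLeast0LessThan)
    also have "\<dots> = (\<lambda>k. L ! k) ` {..<d}" using permutes_image[OF perm] by simp
    also have "\<dots> = set L" using lenL by (auto simp: in_set_conv_nth image_iff)
    finally have s: "set (h \<sigma>) = set L" .
    have "inj_on (\<lambda>k. L ! \<sigma> k) {0..<d}"
    proof (rule inj_onI)
      fix x y assume xy: "x \<in> {0..<d}" "y \<in> {0..<d}" "L ! \<sigma> x = L ! \<sigma> y"
      have "\<sigma> x < d" "\<sigma> y < d" using xy permutes_in_image[OF perm] by auto
      then have "\<sigma> x = \<sigma> y" using xy(3) distL lenL nth_eq_iff_index_eq by metis
      then show "x = y" using permutes_inj[OF perm] by (simp add: inj_eq)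
    qed
    then have "distinct (h \<sigma>)" by (simp add: h_def distinct_map)
    then show ?thesis using s by (simp add: permutations_of_set_def)
  qed
  have inj: "inj_on h P"
  proof (rule inj_onI)
    fix \<sigma> \<tau> assume st: "\<sigma> \<in> P" "\<tau> \<in> P" "h \<sigma> = h \<tau>"
    have p1: "\<sigma> permutes {..<d}" and p2: "\<tau> permutes {..<d}" using st by (auto simp: P_def)
    show "\<sigma> = \<tau>"
    proof
      fix k
      show "\<sigma> k = \<tau> k"
      proof (cases "k < d")
        case True
        have "h \<sigma> ! k = h \<tau> ! k" using st by simp
        then have "L ! \<sigma> k = L ! \<tau> k" using True by (simp add: h_def)
        moreover have "\<sigma> k < d" "\<tau> k < d" using True permutes_in_image[OF p1] permutes_in_image[OF p2] by auto
        ultimately show ?thesis using distL lenL nth_eq_iff_index_eq by metis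
      next
        case False
        then show ?thesis using permutes_not_in[OF p1] permutes_not_in[OF p2] by simp
      qed
    qed
  qed
  have img: "h ` P = permutations_of_set (set L)"
  proof (rule card_subset_eq)
    show "finite (permutations_of_set (set L))" by simp
    show "h ` P \<subseteq> permutations_of_set (set L)" using hin by auto
    have "card (h ` P) = card P" by (rule card_image[OF inj])
    also have "\<dots> = fact d" unfolding P_def by (rule card_permutations) simp_all
    also have "\<dots> = card (permutations_of_set (set L))" using distinct_card[OF distL] lenL by simp
    finally show "card (h ` P) = card (permutations_of_set (set L))" .
  qed
  have tmx: "yconst (of_int (sign \<sigma>)) * ser_prod_list (map (\<lambda>k. ser_shift (- of_nat k) (tser (L ! \<sigma> k) (J ! k))) [0..<length J]) m
      = yconst ((-1) ^ ninv (h \<sigma>)) * Pm (h \<sigma>) J m" if "\<sigma> \<in> P" for \<sigma>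
  proof -
    have perm: "\<sigma> permutes {..<d}" using that by (simp add: P_def)
    have sm: "strict_mono_on {..<d} ((!) L)"
      using L lenL by (auto simp: strict_mono_on_def sorted_wrt_nth_less)
    have hh: "h \<sigma> = map ((!) L) (map \<sigma> [0..<d])" by (simp add: h_def)
    have "ninv (h \<sigma>) = ninv (map \<sigma> [0..<d])"
    proof -
      have "set (map \<sigma> [0..<d]) \<subseteq> {..<d}"
      proof
        fix x assume "x \<in> set (map \<sigma> [0..<d])"
        then obtain y where "y < d" "x = \<sigma> y" by auto
        then show "x \<in> {..<d}" using permutes_in_image[OF perm, of y] by simp
      qed
      then show ?thesis unfolding hh by (rule ninv_map_mono[OF sm])
    qed
    then have sg: "of_int (sign \<sigma>) = ((-1::complex) ^ ninv (h \<sigma>))"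
      unfolding sign_ninv[OF perm] by (simp only: of_int_power of_int_minus of_int_1)
    have "map (\<lambda>k. ser_shift (- of_nat k) (tser (L ! \<sigma> k) (J ! k))) [0..<length J] = map (tfac (h \<sigma>) J) [0..<length J]"
      by (rule map_cong[OF refl]) (simp add: tfac_def tF_def h_def d_def)
    then show ?thesis unfolding Pm_def by (simp only: sg)
  qed
  have "tminor L J m = (\<Sum>\<sigma>\<in>P. yconst (of_int (sign \<sigma>)) * ser_prod_list (map (\<lambda>k. ser_shift (- of_nat k) (tser (L ! \<sigma> k) (J ! k))) [0..<length J]) m)"
    unfolding tminor_def P_def d_def by (rule refl)
  also have "\<dots> = (\<Sum>\<sigma>\<in>P. yconst ((-1) ^ ninv (h \<sigma>)) * Pm (h \<sigma>) J m)"
    by (rule sum.cong[OF refl]) (rule tmx)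
  also have "\<dots> = (\<Sum>R\<in>h ` P. yconst ((-1) ^ ninv R) * Pm R J m)"
    by (rule sum.reindex[OF inj, symmetric, unfolded comp_def])
  finally show "tminor L J m = (\<Sum>R\<in>permutations_of_set (set L). yconst ((-1) ^ ninv R) * Pm R J m)"
    by (simp only: img)
qed



lemma Pm_append:
  assumes "length R1 = length J1" "length R2 = length J2"
  shows "Pm (R1 @ R2) (J1 @ J2) = ser_mult (Pm R1 J1) (ser_shift (- of_nat (length J1)) (Pm R2 J2))"
proof -
  let ?c = "length J1" and ?p = "length J2"
  have u: "[0..<length (J1 @ J2)] = [0..<?c] @ map (\<lambda>i. i + ?c) [0..<?p]"
    using upt_add_eq_append[of 0 ?c ?p] by (simp add: map_add_upt add.commute)
  have m1: "map (tfac (R1 @ R2) (J1 @ J2)) [0..<?c] = map (tfac R1 J1) [0..<?c]"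
    by (rule map_cong[OF refl]) (use assms in \<open>simp add: tfac_def nth_append\<close>)
  have m2: "map (tfac (R1 @ R2) (J1 @ J2)) (map (\<lambda>i. i + ?c) [0..<?p])
      = map (ser_shift (- of_nat ?c)) (map (tfac R2 J2) [0..<?p])"
  proof -
    have "tfac (R1 @ R2) (J1 @ J2) (k + ?c) = ser_shift (- of_nat ?c) (tfac R2 J2 k)" for k
    proof -
      have e: "(- of_nat ?c + - of_nat k :: complex) = - of_nat (k + ?c)" by simp
      have "tfac (R1 @ R2) (J1 @ J2) (k + ?c) = ser_shift (- of_nat (k + ?c)) (tser (R2 ! k) (J2 ! k))"
        using assms by (simp add: tfac_def tF_def nth_append)
      also have "\<dots> = ser_shift (- of_nat ?c) (tfac R2 J2 k)"
        unfolding tfac_def tF_def ser_shift_shift e ..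
      finally show ?thesis .
    qed
    then show ?thesis by simp
  qed
  show ?thesis
    unfolding Pm_def u map_append ser_prod_list_append m1 m2 ser_shift_prod_list ..
qed

lemma sg_append:
  "((-1::complex) ^ ninv (R1 @ R2)) = (-1) ^ ninv (sort R1 @ sort R2) * (-1) ^ ninv R1 * (-1) ^ ninv R2"
proof -
  have "((-1::int) ^ ninv (R1 @ R2)) = (-1) ^ ninv (sort R1 @ sort R2) * (-1) ^ ninv R1 * (-1) ^ ninv R2"
    using sign_append_sort[of R1 R2] by (simp add: minus_one_power_iff split: if_splits)
  then have "of_int ((-1::int) ^ ninv (R1 @ R2)) = (of_int ((-1) ^ ninv (sort R1 @ sort R2) * (-1) ^ ninv R1 * (-1) ^ ninv R2) :: complex)"
    by (rule arg_cong)
  then show ?thesis by simp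
qed

definition splits :: "nat list \<Rightarrow> nat \<Rightarrow> (nat list \<times> nat list) set" where
  "splits L c = {(K, G). sorted_wrt (<) K \<and> sorted_wrt (<) G \<and> length K = c \<and> distinct (K @ G) \<and> set (K @ G) = set L}"

lemma finite_splits: "finite (splits L c)"
proof -
  let ?B = "{xs. set xs \<subseteq> set L \<and> length xs \<le> length L}"
  have fin: "finite ?B" by (rule finite_lists_length_le) simp
  have "splits L c \<subseteq> ?B \<times> ?B"
  proof
    fix x assume x: "x \<in> splits L c"
    obtain K G where x2: "x = (K, G)" by (cases x)
    have d: "distinct (K @ G)" and s: "set (K @ G) = set L" using x x2 by (auto simp: splits_def)
    have "length K + length G = card (set L)" using distinct_card[OF d] s by simp
    then have "length K \<le> length L \<and> length G \<le> length L" using card_length[of L] by linarith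
    then show "x \<in> ?B \<times> ?B" using s x2 by auto
  qed
  then show ?thesis by (rule finite_subset) (simp add: fin)
qed


lemma perm_set_len: "R \<in> permutations_of_set A \<Longrightarrow> length R = card A"
  by (auto simp: permutations_of_set_def distinct_card)

lemma laplace:
  assumes L: "sorted_wrt (<) L" and len: "length L = length J1 + length J2"
  shows "tminor L (J1 @ J2) = (\<lambda>m. \<Sum>(K, G)\<in>splits L (length J1).
           yconst ((-1) ^ ninv (K @ G)) * ser_mult (tminor K J1) (ser_shift (- of_nat (length J1)) (tminor G J2)) m)"
proof
  fix m
  let ?c = "length J1" and ?p = "length J2"
  let ?sh = "ser_shift (- of_nat ?c)"
  define PL where "PL = permutations_of_set (set L)"
  define A where "A = {(R1, R2). length R1 = ?c \<and> R1 @ R2 \<in> PL}"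
  define app where "app = (\<lambda>(R1::nat list, R2::nat list). R1 @ R2)"
  define key where "key = (\<lambda>(R1::nat list, R2::nat list). (sort R1, sort R2))"
  define T where "T = splits L ?c"
  define g where "g R = yconst ((-1) ^ ninv R) * Pm R (J1 @ J2) m" for R
  have distL: "distinct L" using L by (simp add: strict_sorted_iff)
  have cardL: "card (set L) = length L" by (rule distinct_card[OF distL])
  have inj: "inj_on app A"
    by (rule inj_onI) (auto simp: app_def A_def)
  have img: "app ` A = PL"
  proof (intro equalityI subsetI)
    fix R assume "R \<in> app ` A" then show "R \<in> PL" by (auto simp: app_def A_def)
  next
    fix R assume R: "R \<in> PL"
    then have "length R = length L" using perm_set_len[of R "set L"] cardL by (simp add: PL_def)
    then have "(take ?c R, drop ?c R) \<in> A" using R len by (simp add: A_def)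
    moreover have "R = app (take ?c R, drop ?c R)" by (simp add: app_def)
    ultimately show "R \<in> app ` A" by blast
  qed
  have finA: "finite A"
  proof -
    have "finite (app ` A)" unfolding img PL_def by simp
    then show ?thesis using finite_imageD[OF _ inj] by blast
  qed
  have keyT: "key ` A \<subseteq> T"
  proof
    fix y assume "y \<in> key ` A"
    then obtain R1 R2 where r: "(R1, R2) \<in> A" "y = (sort R1, sort R2)" by (auto simp: key_def)
    have d: "distinct (R1 @ R2)" and s: "set (R1 @ R2) = set L" and l: "length R1 = ?c"
      using r by (auto simp: A_def PL_def permutations_of_set_def)
    show "y \<in> T" using r d s l by (auto simp: T_def splits_def strict_sorted_iff)
  qed
  have fiber: "{x \<in> A. key x = (K, G)} = permutations_of_set (set K) \<times> permutations_of_set (set G)"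
    if KG: "(K, G) \<in> T" for K G
  proof -
    have K: "sorted_wrt (<) K" and G: "sorted_wrt (<) G" and lK: "length K = ?c"
      and dKG: "distinct (K @ G)" and sKG: "set (K @ G) = set L"
      using KG by (auto simp: T_def splits_def)
    show ?thesis
    proof (intro equalityI subsetI)
      fix x assume x: "x \<in> {x \<in> A. key x = (K, G)}"
      obtain R1 R2 where x2: "x = (R1, R2)" by (cases x)
      have d: "distinct (R1 @ R2)" and "sort R1 = K" "sort R2 = G"
        using x x2 by (auto simp: A_def PL_def key_def permutations_of_set_def)
      then have "set R1 = set K" "set R2 = set G" by (metis set_sort)+
      then show "x \<in> permutations_of_set (set K) \<times> permutations_of_set (set G)"
        using d x2 by (auto simp: permutations_of_set_def)
    next
      fix x assume x: "x \<in> permutations_of_set (set K) \<times> permutations_of_set (set G)"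
      obtain R1 R2 where x2: "x = (R1, R2)" by (cases x)
      have r1: "set R1 = set K" "distinct R1" and r2: "set R2 = set G" "distinct R2"
        using x x2 by (auto simp: permutations_of_set_def)
      have dK: "distinct K" and dG: "distinct G" using K G by (auto simp: strict_sorted_iff)
      have "length R1 = length K" using r1 dK by (metis distinct_card)
      moreover have "distinct (R1 @ R2)" using r1 r2 dKG by auto
      moreover have "set (R1 @ R2) = set L" using r1 r2 sKG by auto
      moreover have "sort R1 = K"
        by (rule properties_for_sort) (use r1 dK K in \<open>simp_all add: set_eq_iff_mset_eq_distinct[symmetric] strict_sorted_iff\<close>)
      moreover have "sort R2 = G"
        by (rule properties_for_sort) (use r2 dG G in \<open>simp_all add: set_eq_iff_mset_eq_distinct[symmetric] strict_sorted_iff\<close>)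
      ultimately show "x \<in> {x \<in> A. key x = (K, G)}"
        using x2 lK by (auto simp: A_def PL_def permutations_of_set_def key_def)
    qed
  qed
  have inner: "(\<Sum>x\<in>{x \<in> A. key x = (K, G)}. g (app x))
      = yconst ((-1) ^ ninv (K @ G)) * ser_mult (tminor K J1) (?sh (tminor G J2)) m"
    if KG: "(K, G) \<in> T" for K G
  proof -
    have K: "sorted_wrt (<) K" and G: "sorted_wrt (<) G" and lK: "length K = ?c"
      and dKG: "distinct (K @ G)" and sKG: "set (K @ G) = set L"
      using KG by (auto simp: T_def splits_def)
    have lG: "length G = ?p"
    proof -
      have "length K + length G = length L" using distinct_card[OF dKG] sKG cardL by simp
      then show ?thesis using lK len by simp
    qed
    define PK where "PK = permutations_of_set (set K)"
    define PG where "PG = permutations_of_set (set G)"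
    have tK: "tminor K J1 = (\<lambda>m. \<Sum>R\<in>PK. yconst ((-1) ^ ninv R) * Pm R J1 m)"
      unfolding PK_def by (rule tminor_lperms[OF K]) (simp add: lK)
    have tG: "tminor G J2 = (\<lambda>m. \<Sum>R\<in>PG. yconst ((-1) ^ ninv R) * Pm R J2 m)"
      unfolding PG_def by (rule tminor_lperms[OF G]) (simp add: lG)
    have each: "g (app (R1, R2)) = yconst ((-1) ^ ninv (K @ G)) *
        (yconst ((-1) ^ ninv R1 * (-1) ^ ninv R2) * ser_mult (Pm R1 J1) (?sh (Pm R2 J2)) m)"
      if r: "(R1, R2) \<in> PK \<times> PG" for R1 R2
    proof -
      have "(R1, R2) \<in> {x \<in> A. key x = (K, G)}" using fiber[OF KG] r by (simp add: PK_def PG_def)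
      then have s1: "sort R1 = K" and s2: "sort R2 = G" by (auto simp: key_def)
      have l1: "length R1 = length J1" using r perm_set_len[of R1 "set K"] distinct_card[of K] K lK
        by (simp add: PK_def strict_sorted_iff)
      have l2: "length R2 = length J2" using r perm_set_len[of R2 "set G"] distinct_card[of G] G lG
        by (simp add: PG_def strict_sorted_iff)
      have "g (app (R1, R2)) = yconst ((-1) ^ ninv (K @ G) * ((-1) ^ ninv R1 * (-1) ^ ninv R2))
          * ser_mult (Pm R1 J1) (?sh (Pm R2 J2)) m"
        unfolding g_def app_def by (simp add: Pm_append[OF l1 l2] sg_append[of R1 R2] s1 s2 mult_ac)
      then show ?thesis by (simp add: yconst_mult mult.assoc)
    qed
    have "(\<Sum>x\<in>{x \<in> A. key x = (K, G)}. g (app x)) = (\<Sum>(R1, R2)\<in>PK \<times> PG. g (app (R1, R2)))"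
      unfolding fiber[OF KG] PK_def PG_def by (simp add: case_prod_beta)
    also have "\<dots> = (\<Sum>(R1, R2)\<in>PK \<times> PG. yconst ((-1) ^ ninv (K @ G)) *
        (yconst ((-1) ^ ninv R1 * (-1) ^ ninv R2) * ser_mult (Pm R1 J1) (?sh (Pm R2 J2)) m))"
      by (rule sum.cong[OF refl]) (use each in auto)
    also have "\<dots> = yconst ((-1) ^ ninv (K @ G)) * (\<Sum>(R1, R2)\<in>PK \<times> PG.
        yconst ((-1) ^ ninv R1 * (-1) ^ ninv R2) * ser_mult (Pm R1 J1) (?sh (Pm R2 J2)) m)"
      unfolding sum_distrib_left by (rule sum.cong[OF refl]) auto
    also have "\<dots> = yconst ((-1) ^ ninv (K @ G)) * (\<Sum>R1\<in>PK. \<Sum>R2\<in>PG.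
        yconst ((-1) ^ ninv R1 * (-1) ^ ninv R2) * ser_mult (Pm R1 J1) (?sh (Pm R2 J2)) m)"
      by (simp only: sum.cartesian_product)
    also have "(\<Sum>R1\<in>PK. \<Sum>R2\<in>PG. yconst ((-1) ^ ninv R1 * (-1) ^ ninv R2) * ser_mult (Pm R1 J1) (?sh (Pm R2 J2)) m)
        = ser_mult (tminor K J1) (?sh (tminor G J2)) m"
      unfolding tK tG ser_shift_sum ser_shift_scal ser_mult_sum_left ser_mult_sum_right
        ser_mult_scal_left ser_mult_scal_right sum_distrib_left
      by (simp add: yconst_mult mult.assoc)
    finally show ?thesis .
  qed
  have "tminor L (J1 @ J2) m = (\<Sum>R\<in>PL. g R)"
    unfolding PL_def g_def by (subst tminor_lperms[OF L]) (simp_all add: len)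
  also have "\<dots> = (\<Sum>x\<in>A. g (app x))"
    unfolding img[symmetric] by (rule sum.reindex[OF inj, unfolded comp_def])
  also have "\<dots> = (\<Sum>y\<in>T. \<Sum>x\<in>{x \<in> A. key x = y}. g (app x))"
    by (rule sum.group[OF finA _ keyT, symmetric]) (simp add: T_def finite_splits)
  also have "\<dots> = (\<Sum>(K, G)\<in>T. yconst ((-1) ^ ninv (K @ G)) * ser_mult (tminor K J1) (?sh (tminor G J2)) m)"
    by (rule sum.cong[OF refl]) (use inner in auto)
  finally show "tminor L (J1 @ J2) m = (\<Sum>(K, G)\<in>splits L ?c.
           yconst ((-1) ^ ninv (K @ G)) * ser_mult (tminor K J1) (?sh (tminor G J2)) m)"
    by (simp only: T_def)
qed




section \<open>Column antisymmetry modulo the Yangian relations\<close>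

lemma aswap_aswap: "Suc k < length xs \<Longrightarrow> aswap (aswap xs k) k = xs"
  by (rule nth_equalityI) (auto simp: aswap_nth transpose_def)

lemma aswap_nth_other: "Suc k < length xs \<Longrightarrow> i \<noteq> k \<Longrightarrow> i \<noteq> Suc k \<Longrightarrow> aswap xs k ! i = xs ! i"
  by (simp add: aswap_def)

lemma aswap_nth_k: "Suc k < length xs \<Longrightarrow> aswap xs k ! k = xs ! Suc k"
  by (simp add: aswap_def nth_list_update)

lemma aswap_nth_Suc_k: "Suc k < length xs \<Longrightarrow> aswap xs k ! Suc k = xs ! k"
  by (simp add: aswap_def)

lemma sg_aswap:
  assumes "distinct R" "Suc k < length R"
  shows "((-1::complex) ^ ninv (aswap R k)) = - ((-1) ^ ninv R)"
proof (cases "R ! Suc k < R ! k")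
  case True
  have "((-1::int) ^ ninv (aswap R k)) = - ((-1) ^ ninv R)" by (rule ninv_parity_aswap[OF assms(2) True])
  then have "of_int ((-1::int) ^ ninv (aswap R k)) = (of_int (- ((-1) ^ ninv R)) :: complex)" by simp
  then show ?thesis by simp
next
  case False
  have ne: "R ! Suc k \<noteq> R ! k" using assms by (simp add: nth_eq_iff_index_eq)
  let ?R = "aswap R k"
  have l: "Suc k < length ?R" using assms by simp
  have "?R ! Suc k < ?R ! k" using False ne assms by (simp add: aswap_nth_k aswap_nth_Suc_k)
  then have "((-1::int) ^ ninv (aswap ?R k)) = - ((-1) ^ ninv ?R)" by (rule ninv_parity_aswap[OF l])
  then have "((-1::int) ^ ninv R) = - ((-1) ^ ninv ?R)" using aswap_aswap[OF assms(2)] by simp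
  then have "of_int ((-1::int) ^ ninv ?R) = (of_int (- ((-1) ^ ninv R)) :: complex)" by simp
  then show ?thesis by simp
qed

lemma Pm_split:
  assumes "Suc k < length J"
  shows "Pm R J = ser_mult (ser_prod_list (map (tfac R J) [0..<k]))
      (ser_mult (ser_mult (tfac R J k) (tfac R J (Suc k))) (ser_prod_list (map (tfac R J) [Suc (Suc k)..<length J])))"
proof -
  have u: "[0..<length J] = [0..<k] @ [k, Suc k] @ [Suc (Suc k)..<length J]"
    using assms by (metis append_Cons append_Nil upt_add_eq_append upt_conv_Cons zero_le Suc_lessD le_add_diff_inverse less_imp_le_nat)
  show ?thesis
    unfolding Pm_def u map_append ser_prod_list_append
    by (simp add: ser_prod_list_Cons ser_prod_list_Nil ser_mult_assoc)
qed


lemma col_swap: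
  assumes L: "sorted_wrt (<) L" and len: "length L = length J"
    and sL: "set L \<subseteq> {1..n}" and sJ: "set J \<subseteq> {1..n}" and k: "Suc k < length J"
  shows "tminor L (aswap J k) m + tminor L J m \<in> yideal n"
proof -
  let ?J' = "aswap J k"
  define PL where "PL = permutations_of_set (set L)"
  define sw where "sw R = aswap R k" for R :: "nat list"
  define sg where "sg R = ((-1::complex) ^ ninv R)" for R
  have dL: "distinct L" using L by (simp add: strict_sorted_iff)
  have lenPL: "length R = length J" if "R \<in> PL" for R
  proof -
    have "length R = card (set L)" using perm_set_len[of R "set L"] that unfolding PL_def by blast
    then show ?thesis using distinct_card[OF dL] len by simp
  qed
  have dPL: "distinct R" if "R \<in> PL" for R
    using that unfolding PL_def permutations_of_set_def by blast
  have swPL: "sw R \<in> PL" if "R \<in> PL" for R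
  proof -
    have "Suc k < length R" using lenPL[OF that] k by simp
    then show ?thesis using that unfolding PL_def sw_def permutations_of_set_def
      using aswap_set aswap_distinct by blast
  qed
  have swsw: "sw (sw R) = R" if "R \<in> PL" for R
  proof -
    have "Suc k < length R" using lenPL[OF that] k by simp
    then show ?thesis unfolding sw_def by (rule aswap_aswap)
  qed
  have sgsw: "sg (sw R) = - sg R" if "R \<in> PL" for R
  proof -
    have "Suc k < length R" using lenPL[OF that] k by simp
    then show ?thesis unfolding sg_def sw_def by (rule sg_aswap[OF dPL[OF that]])
  qed
  have S: "tminor L JJ m = (\<Sum>R\<in>PL. yconst (sg R) * Pm R JJ m)" if "length JJ = length J" for JJ
  proof -
    have "length L = length JJ" using that len by simp
    from tminor_lperms[OF L this] show ?thesis unfolding PL_def sg_def by (rule fun_cong)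
  qed
  have twice: "tminor L JJ m + tminor L JJ m = (\<Sum>R\<in>PL. yconst (sg R) * (Pm R JJ m - Pm (sw R) JJ m))"
    if "length JJ = length J" for JJ
  proof -
    have "(\<Sum>R\<in>PL. yconst (sg R) * Pm R JJ m) = (\<Sum>R\<in>PL. yconst (sg (sw R)) * Pm (sw R) JJ m)"
      by (rule sum.reindex_bij_witness[of _ sw sw]) (auto simp: swsw swPL)
    also have "\<dots> = (\<Sum>R\<in>PL. - (yconst (sg R) * Pm (sw R) JJ m))"
      by (rule sum.cong[OF refl]) (simp add: sgsw yconst_uminus)
    finally have eq: "(\<Sum>R\<in>PL. yconst (sg R) * Pm R JJ m) = (\<Sum>R\<in>PL. - (yconst (sg R) * Pm (sw R) JJ m))" .
    have "tminor L JJ m + tminor L JJ m = (\<Sum>R\<in>PL. yconst (sg R) * Pm R JJ m) + (\<Sum>R\<in>PL. yconst (sg R) * Pm R JJ m)"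
      by (simp only: S[OF that])
    also have "\<dots> = (\<Sum>R\<in>PL. yconst (sg R) * Pm R JJ m) + (\<Sum>R\<in>PL. - (yconst (sg R) * Pm (sw R) JJ m))"
      by (rule arg_cong[where f="\<lambda>x. (\<Sum>R\<in>PL. yconst (sg R) * Pm R JJ m) + x", OF eq])
    also have "\<dots> = (\<Sum>R\<in>PL. yconst (sg R) * Pm R JJ m + - (yconst (sg R) * Pm (sw R) JJ m))"
      by (rule sum.distrib[symmetric])
    also have "\<dots> = (\<Sum>R\<in>PL. yconst (sg R) * (Pm R JJ m - Pm (sw R) JJ m))"
      by (rule sum.cong[OF refl]) (simp add: right_diff_distrib)
    finally show ?thesis .
  qed
  have DR: "Pm R J m - Pm (sw R) J m + (Pm R ?J' m - Pm (sw R) ?J' m) \<in> yideal n" if R: "R \<in> PL" for R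
  proof -
    have lR: "length R = length J" by (rule lenPL[OF R])
    have kR: "Suc k < length R" using lR k by simp
    define A where "A = ser_prod_list (map (tfac R J) [0..<k])"
    define B where "B = ser_prod_list (map (tfac R J) [Suc (Suc k)..<length J])"
    let ?a = "R ! k" and ?b = "R ! Suc k" and ?j = "J ! k" and ?j' = "J ! Suc k"
    have same: "tfac R2 J2 i = tfac R J i"
      if "R2 = R \<or> R2 = sw R" "J2 = J \<or> J2 = ?J'" "i < length J" "i \<noteq> k" "i \<noteq> Suc k" for R2 J2 i
    proof -
      have r: "R2 ! i = R ! i"
        using that(1) aswap_nth_other[OF kR that(4) that(5)] unfolding sw_def by (elim disjE) simp_all
      have j: "J2 ! i = J ! i"
        using that(2) aswap_nth_other[OF k that(4) that(5)] by (elim disjE) simp_all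
      show ?thesis unfolding tfac_def r j ..
    qed
    have AB: "ser_prod_list (map (tfac R2 J2) [0..<k]) = A \<and>
        ser_prod_list (map (tfac R2 J2) [Suc (Suc k)..<length J]) = B"
      if "R2 = R \<or> R2 = sw R" "J2 = J \<or> J2 = ?J'" for R2 J2
    proof -
      have m1: "map (tfac R2 J2) [0..<k] = map (tfac R J) [0..<k]"
      proof (rule map_cong[OF refl])
        fix i assume "i \<in> set [0..<k]"
        then have "i < length J" "i \<noteq> k" "i \<noteq> Suc k" using k by auto
        then show "tfac R2 J2 i = tfac R J i" by (rule same[OF that])
      qed
      have m2: "map (tfac R2 J2) [Suc (Suc k)..<length J] = map (tfac R J) [Suc (Suc k)..<length J]"
      proof (rule map_cong[OF refl])
        fix i assume "i \<in> set [Suc (Suc k)..<length J]"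
        then have "i < length J" "i \<noteq> k" "i \<noteq> Suc k" by auto
        then show "tfac R2 J2 i = tfac R J i" by (rule same[OF that])
      qed
      show ?thesis unfolding A_def B_def m1 m2 by (intro conjI refl)
    qed
    have lsw: "length (sw R) = length J" using lR by (simp add: sw_def)
    have P1: "Pm R J = ser_mult A (ser_mult (ser_mult (tF k ?a ?j) (tF (Suc k) ?b ?j')) B)"
      using Pm_split[OF k, of R] AB[of R J] by (simp add: tfac_def)
    have P2: "Pm (sw R) J = ser_mult A (ser_mult (ser_mult (tF k ?b ?j) (tF (Suc k) ?a ?j')) B)"
      using Pm_split[OF k, of "sw R"] AB[of "sw R" J] kR by (simp add: tfac_def sw_def aswap_nth_k aswap_nth_Suc_k)
    have P3: "Pm R ?J' = ser_mult A (ser_mult (ser_mult (tF k ?a ?j') (tF (Suc k) ?b ?j)) B)"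
      using Pm_split[of k ?J' R] AB[of R ?J'] k by (simp add: tfac_def aswap_nth_k aswap_nth_Suc_k)
    have P4: "Pm (sw R) ?J' = ser_mult A (ser_mult (ser_mult (tF k ?b ?j') (tF (Suc k) ?a ?j)) B)"
      using Pm_split[of k ?J' "sw R"] AB[of "sw R" ?J'] k kR by (simp add: tfac_def sw_def aswap_nth_k aswap_nth_Suc_k)
    define X where "X = (\<lambda>m. ser_mult (tF k ?a ?j) (tF (Suc k) ?b ?j') m - ser_mult (tF k ?b ?j) (tF (Suc k) ?a ?j') m
       + ser_mult (tF k ?a ?j') (tF (Suc k) ?b ?j) m - ser_mult (tF k ?b ?j') (tF (Suc k) ?a ?j) m)"
    have XI: "X q \<in> yideal n" for q
    proof -
      have sR: "set R = set L" using R unfolding PL_def permutations_of_set_def by blast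
      have "?a \<in> set R" "?b \<in> set R" using kR by simp_all
      then have a1: "?a \<in> {1..n}" and b1: "?b \<in> {1..n}" using sR sL by blast+
      have "?j \<in> set J" "?j' \<in> set J" using k by simp_all
      then have j1: "?j \<in> {1..n}" and j2: "?j' \<in> {1..n}" using sJ by blast+
      show ?thesis unfolding X_def by (rule yang_X[OF a1 b1 j1 j2])
    qed
    have "Pm R J m - Pm (sw R) J m + (Pm R ?J' m - Pm (sw R) ?J' m) = ser_mult A (ser_mult X B) m"
      unfolding P1 P2 P3 P4 X_def ser_mult_diff_left ser_mult_add_left ser_mult_diff_right ser_mult_add_right
      by (simp add: algebra_simps)
    also have "\<dots> \<in> yideal n"
      by (intro ser_mult_ideal_right ser_mult_ideal_left XI)
    finally show ?thesis .
  qed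
  have tw1: "tminor L J m + tminor L J m = (\<Sum>R\<in>PL. yconst (sg R) * (Pm R J m - Pm (sw R) J m))"
    by (rule twice) (rule refl)
  have tw2: "tminor L ?J' m + tminor L ?J' m = (\<Sum>R\<in>PL. yconst (sg R) * (Pm R ?J' m - Pm (sw R) ?J' m))"
    by (rule twice) simp
  have "yconst 2 * (tminor L ?J' m + tminor L J m) = (tminor L J m + tminor L J m) + (tminor L ?J' m + tminor L ?J' m)"
    by (simp add: yconst_def algebra_simps mult_2[symmetric] flip: single_numeral)
  also have "\<dots> = (\<Sum>R\<in>PL. yconst (sg R) * (Pm R J m - Pm (sw R) J m + (Pm R ?J' m - Pm (sw R) ?J' m)))"
    unfolding tw1 tw2 by (simp only: sum.distrib[symmetric] distrib_left)
  also have "\<dots> \<in> yideal n" by (intro yi_sum yi_lmult DR)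
  finally have "yconst 2 * (tminor L ?J' m + tminor L J m) \<in> yideal n" .
  then have "yconst (1/2) * (yconst 2 * (tminor L ?J' m + tminor L J m)) \<in> yideal n" by (rule yi_lmult)
  then show ?thesis by (simp add: mult.assoc[symmetric] yconst_mult[symmetric])
qed


lemma yhalf: "yconst (1/2) * (x + x) = x"
proof -
  have "yconst (1/2) * (x + x) = (yconst (1/2) + yconst (1/2)) * x" by (simp only: distrib_left distrib_right)
  also have "\<dots> = x" by (simp only: yconst_add[symmetric]) simp
  finally show ?thesis .
qed

lemma col_sort:
  assumes L: "sorted_wrt (<) L" and sL: "set L \<subseteq> {1..n}" and len: "length J = length L"
    and sJ: "set J \<subseteq> {1..n}"
  shows "tminor L (sort J) m - sgnv (ninv J) (tminor L J m) \<in> yideal n"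
proof -
  define f where "f xs = (if length xs = length L \<and> set xs \<subseteq> {1..n} then tminor L xs m else 0)" for xs
  have G: "f (sort J) - sgnv (ninv J) (f J) \<in> yideal n"
  proof (rule sort_sign_gen)
    fix xs :: "nat list" and k assume k: "Suc k < length xs" "xs ! Suc k < xs ! k"
    show "f (aswap xs k) + f xs \<in> yideal n"
    proof (cases "length xs = length L \<and> set xs \<subseteq> {1..n}")
      case True
      have "tminor L (aswap xs k) m + tminor L xs m \<in> yideal n"
        by (rule col_swap[OF L _ sL _ k(1)]) (use True in auto)
      then show ?thesis using True k by (simp add: f_def aswap_set)
    next
      case False
      then show ?thesis using k by (auto simp add: f_def aswap_set)
    qed
  qed (auto intro: yi_add yi_uminus)
  then show ?thesis using len sJ by (simp add: f_def)
qed

lemma sorted_not_distinct_adj: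
  assumes "sorted xs" "\<not> distinct xs"
  shows "\<exists>k. Suc k < length xs \<and> xs ! k = xs ! Suc k"
proof -
  have "\<not> sorted_wrt (<) xs" using assms by (simp add: strict_sorted_iff)
  then obtain k where k: "Suc k < length xs" "\<not> xs ! k < xs ! Suc k"
    by (auto simp: sorted_wrt_iff_nth_Suc_transp)
  moreover have "xs ! k \<le> xs ! Suc k" using assms(1) k(1) by (simp add: sorted_iff_nth_Suc)
  ultimately show ?thesis by auto
qed

lemma col_zero:
  assumes L: "sorted_wrt (<) L" and sL: "set L \<subseteq> {1..n}" and len: "length J = length L"
    and sJ: "set J \<subseteq> {1..n}" and nd: "\<not> distinct J"
  shows "tminor L J m \<in> yideal n"
proof -
  let ?S = "sort J"
  obtain k where k: "Suc k < length ?S" "?S ! k = ?S ! Suc k"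
    using sorted_not_distinct_adj[of ?S] nd by auto
  have sw: "aswap ?S k = ?S"
  proof -
    have "?S[k := ?S ! Suc k] = ?S" using k(2) list_update_id[of ?S k] by simp
    then show ?thesis unfolding aswap_def using k(2) list_update_id[of ?S "Suc k"] by simp
  qed
  have "tminor L (aswap ?S k) m + tminor L ?S m \<in> yideal n"
    by (rule col_swap[OF L _ sL _ k(1)]) (use len sJ in auto)
  then have "tminor L ?S m + tminor L ?S m \<in> yideal n" by (simp only: sw)
  then have "yconst (1/2) * (tminor L ?S m + tminor L ?S m) \<in> yideal n" by (rule yi_lmult)
  then have S0: "tminor L ?S m \<in> yideal n" by (simp only: yhalf)
  have "tminor L ?S m - sgnv (ninv J) (tminor L J m) \<in> yideal n" by (rule col_sort[OF L sL len sJ])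
  then have "tminor L ?S m - (tminor L ?S m - sgnv (ninv J) (tminor L J m)) \<in> yideal n"
    by (rule yi_diff[OF S0])
  then have "sgnv (ninv J) (tminor L J m) \<in> yideal n" by simp
  then show ?thesis by (auto simp: sgnv_def split: if_splits dest: yi_uminus)
qed




lemma lookup_map_mult: "Poly_Mapping.lookup (Poly_Mapping.map ((*) (c::complex)) p) k = c * Poly_Mapping.lookup p k"
  by (simp add: Poly_Mapping.map.rep_eq when_def)

lemma pm_expand:
  fixes w :: "'a \<Rightarrow>\<^sub>0 complex"
  assumes "finite S" "Poly_Mapping.keys w \<subseteq> S"
  shows "(\<Sum>j\<in>S. Poly_Mapping.single j (Poly_Mapping.lookup w j)) = w"
proof (rule poly_mapping_eqI)
  fix k
  have "Poly_Mapping.lookup (\<Sum>j\<in>S. Poly_Mapping.single j (Poly_Mapping.lookup w j)) k = (\<Sum>j\<in>S. if j = k then Poly_Mapping.lookup w j else 0)"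
    by (simp add: lookup_sum lookup_single when_def)
  also have "\<dots> = Poly_Mapping.lookup w k" using assms by (auto simp: in_keys_iff)
  finally show "Poly_Mapping.lookup (\<Sum>j\<in>S. Poly_Mapping.single j (Poly_Mapping.lookup w j)) k = Poly_Mapping.lookup w k" .
qed

lemma single_as_map: "Poly_Mapping.single j (c::complex) = Poly_Mapping.map ((*) c) (Poly_Mapping.single j 1)"
  by simp

context
  fixes M :: "cvec2 \<Rightarrow> cvec"
  assumes M_add: "\<And>x y. M (x + y) = M x + M y"
    and M_smult: "\<And>c x. M (Poly_Mapping.map ((*) c) x) = Poly_Mapping.map ((*) c) (M x)"
begin

lemma M_zero: "M 0 = 0"
  using M_add[of 0 0] by simp

lemma M_sum: "M (\<Sum>x\<in>A. f x) = (\<Sum>x\<in>A. M (f x))"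
  by (induction A rule: infinite_finite_induct) (simp_all add: M_zero M_add)

lemma M_lookup:
  assumes "finite S" "Poly_Mapping.keys w \<subseteq> S"
  shows "Poly_Mapping.lookup (M w) i = (\<Sum>j\<in>S. Poly_Mapping.lookup w j * Poly_Mapping.lookup (M (Poly_Mapping.single j 1)) i)"
proof -
  have "M w = M (\<Sum>j\<in>S. Poly_Mapping.map ((*) (Poly_Mapping.lookup w j)) (Poly_Mapping.single j 1))"
    by (simp only: single_as_map[symmetric] pm_expand[OF assms])
  also have "\<dots> = (\<Sum>j\<in>S. M (Poly_Mapping.map ((*) (Poly_Mapping.lookup w j)) (Poly_Mapping.single j 1)))"
    by (rule M_sum)
  also have "\<dots> = (\<Sum>j\<in>S. Poly_Mapping.map ((*) (Poly_Mapping.lookup w j)) (M (Poly_Mapping.single j 1)))"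
    by (simp only: M_smult)
  finally show ?thesis by (simp add: lookup_sum lookup_map_mult)
qed

end

lemma rho_alt:
  assumes "finite S" "Poly_Mapping.keys v \<subseteq> S"
  shows "rho n k v (K, a) = (if K \<in> subs n k then
      (\<Sum>(J, r)\<in>S. yconst (Poly_Mapping.lookup v (J, r)) * (if a \<le> r then tminor K J (r - a) else 0)) else 0)"
proof -
  have kS: "\<And>j. Poly_Mapping.lookup v j \<noteq> 0 \<Longrightarrow> j \<in> S" using assms(2) by (auto simp: in_keys_iff)
  show ?thesis unfolding rho_def
    by (auto intro!: sum.mono_neutral_left simp: assms in_keys_iff kS)
qed

lemma rho2_alt:
  assumes "finite S" "Poly_Mapping.keys w \<subseteq> S"
  shows "rho2 n k l w (i1, i2) = (\<Sum>j\<in>S. yconst (Poly_Mapping.lookup w j)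
      * rho n k (Poly_Mapping.single (fst j) 1) i1 * rho n l (Poly_Mapping.single (snd j) 1) i2)"
proof -
  have kS: "\<And>j. Poly_Mapping.lookup w j \<noteq> 0 \<Longrightarrow> j \<in> S" using assms(2) by (auto simp: in_keys_iff)
  show ?thesis unfolding rho2_def
    by (auto intro!: sum.mono_neutral_left simp: assms in_keys_iff kS)
qed

definition rho1 :: "nat \<Rightarrow> nat \<Rightarrow> cidx \<Rightarrow> cidx \<Rightarrow> fyang" where
  "rho1 n k Jr Ka = (if fst Ka \<in> subs n k \<and> snd Ka \<le> snd Jr then tminor (fst Ka) (fst Jr) (snd Jr - snd Ka) else 0)"

lemma rho_single1: "rho n k (Poly_Mapping.single Jr 1) Ka = rho1 n k Jr Ka"
  by (cases Jr, cases Ka) (simp add: rho_def rho1_def)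

lemma lookup_sum_single:
  "Poly_Mapping.lookup (\<Sum>x\<in>A. Poly_Mapping.single (kk x) (cc x)) j = (\<Sum>x\<in>A. if kk x = j then cc x else 0)"
  by (simp add: lookup_sum lookup_single when_def)

lemma keys_sum_single:
  "Poly_Mapping.keys (\<Sum>x\<in>A. Poly_Mapping.single (kk x) (cc x)) \<subseteq> kk ` A"
  using keys_sum[of "\<lambda>x. Poly_Mapping.single (kk x) (cc x)" A] by (auto split: if_splits)

lemma rho2_sum_single:
  assumes "finite A"
  shows "rho2 n k l (\<Sum>x\<in>A. Poly_Mapping.single (kk x) (cc x)) (i1, i2)
    = (\<Sum>x\<in>A. yconst (cc x) * rho1 n k (fst (kk x)) i1 * rho1 n l (snd (kk x)) i2)"
proof -
  define P where "P j = rho1 n k (fst j) i1 * rho1 n l (snd j) i2" for j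
  have "rho2 n k l (\<Sum>x\<in>A. Poly_Mapping.single (kk x) (cc x)) (i1, i2)
      = (\<Sum>j\<in>kk ` A. yconst (\<Sum>x\<in>A. if kk x = j then cc x else 0) * P j)"
    by (subst rho2_alt[of "kk ` A"]) (simp_all add: assms keys_sum_single lookup_sum_single rho_single1 P_def mult.assoc)
  also have "\<dots> = (\<Sum>j\<in>kk ` A. \<Sum>x\<in>A. if kk x = j then yconst (cc x) * P j else 0)"
    by (auto simp: yconst_sum sum_distrib_right intro!: sum.cong)
  also have "\<dots> = (\<Sum>x\<in>A. \<Sum>j\<in>kk ` A. if kk x = j then yconst (cc x) * P j else 0)"
    by (rule sum.swap)
  also have "\<dots> = (\<Sum>x\<in>A. yconst (cc x) * P (kk x))"
    using assms by (simp add: if_distrib[symmetric])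
  finally show ?thesis by (simp add: P_def mult.assoc)
qed

lemma rho_sum_single:
  assumes "finite A"
  shows "rho n k (\<Sum>x\<in>A. Poly_Mapping.single (kk x) (cc x)) i = (\<Sum>x\<in>A. yconst (cc x) * rho1 n k (kk x) i)"
proof -
  obtain K a where i: "i = (K, a)" by (cases i)
  have "rho n k (\<Sum>x\<in>A. Poly_Mapping.single (kk x) (cc x)) (K, a)
      = (if K \<in> subs n k then (\<Sum>(J, r)\<in>kk ` A. yconst (\<Sum>x\<in>A. if kk x = (J, r) then cc x else 0)
            * (if a \<le> r then tminor K J (r - a) else 0)) else 0)"
    by (subst rho_alt[of "kk ` A"]) (simp_all add: assms keys_sum_single lookup_sum_single)
  also have "\<dots> = (\<Sum>j\<in>kk ` A. yconst (\<Sum>x\<in>A. if kk x = j then cc x else 0) * rho1 n k j (K, a))"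
    by (auto simp: rho1_def case_prod_beta intro!: sum.cong)
  also have "\<dots> = (\<Sum>j\<in>kk ` A. \<Sum>x\<in>A. if kk x = j then yconst (cc x) * rho1 n k j (K, a) else 0)"
    by (auto simp: yconst_sum sum_distrib_right intro!: sum.cong)
  also have "\<dots> = (\<Sum>x\<in>A. \<Sum>j\<in>kk ` A. if kk x = j then yconst (cc x) * rho1 n k j (K, a) else 0)"
    by (rule sum.swap)
  also have "\<dots> = (\<Sum>x\<in>A. yconst (cc x) * rho1 n k (kk x) (K, a))"
    using assms by (simp add: if_distrib[symmetric])
  finally show ?thesis by (simp add: i)
qed




definition xmono :: "nat \<Rightarrow> yser" where "xmono a = (\<lambda>r. if r = a then 1 else 0)"
definition Sc :: "complex \<Rightarrow> nat \<Rightarrow> yser" where "Sc c a = (\<lambda>m. yconst (shiftcoef c a m))"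

lemma ser_mult_mono_left: "ser_mult (xmono a) f m = (if a \<le> m then f (m - a) else 0)"
proof -
  have "ser_mult (xmono a) f m = (\<Sum>x\<le>m. if x = a then f (m - x) else 0)"
    unfolding ser_mult_def xmono_def by (rule sum.cong) auto
  then show ?thesis by simp
qed

lemma ser_mult_mono_right: "ser_mult f (xmono a) m = (if a \<le> m then f (m - a) else 0)"
proof -
  have "ser_mult f (xmono a) m = (\<Sum>x\<le>m. if x = m - a \<and> a \<le> m then f x else 0)"
    unfolding ser_mult_def xmono_def by (rule sum.cong) auto
  also have "\<dots> = (if a \<le> m then f (m - a) else 0)"
    by (cases "a \<le> m") simp_all
  finally show ?thesis .
qed

lemma mono_comm: "ser_mult (xmono a) f = ser_mult f (xmono a)"
  by (rule ext) (simp add: ser_mult_mono_left ser_mult_mono_right)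

lemma shift_mono: "ser_shift c (xmono a) = Sc c a"
proof
  fix m
  have "ser_shift c (xmono a) m = (\<Sum>r\<le>m. if r = a then yconst (shiftcoef c a m) else 0)"
    unfolding ser_shift_def xmono_def by (rule sum.cong) auto
  also have "\<dots> = yconst (shiftcoef c a m)" by (auto simp: sc_zero_lt)
  finally show "ser_shift c (xmono a) m = Sc c a m" by (simp add: Sc_def)
qed

lemma rho1_mono: "rho1 n k (J, r) (K, a) = (if K \<in> subs n k then ser_mult (xmono a) (tminor K J) r else 0)"
  by (simp add: rho1_def ser_mult_mono_left)

lemma gen2_sum: "gen2 c I Lam s = (\<Sum>x\<in>Sigma {..s} (\<lambda>m. {..m}). Poly_Mapping.single ((I, snd x), (Lam, s - fst x)) (shiftcoef (of_nat c) (snd x) (fst x)))"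
  unfolding gen2_def by (simp add: sum.Sigma case_prod_beta)

lemma lookup_gen2:
  "Poly_Mapping.lookup (gen2 c K G t) ((K', a), (G', b))
     = (if K' = K \<and> G' = G \<and> b \<le> t then shiftcoef (of_nat c) a (t - b) else 0)"
proof -
  define P where "P m = (K' = K \<and> G' = G \<and> m = t - b \<and> b \<le> t)" for m
  have "Poly_Mapping.lookup (gen2 c K G t) ((K', a), (G', b))
      = (\<Sum>m\<le>t. \<Sum>r\<le>m. if r = a then (if P m then shiftcoef (of_nat c) r m else 0) else 0)"
    unfolding gen2_def lookup_sum lookup_single when_def P_def
    by (intro sum.cong refl) auto
  also have "\<dots> = (\<Sum>m\<le>t. if m = t - b then (if a \<le> m \<and> P m then shiftcoef (of_nat c) a m else 0) else 0)"
    by (intro sum.cong refl) (auto simp: P_def)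
  also have "\<dots> = (if a \<le> t - b \<and> P (t - b) then shiftcoef (of_nat c) a (t - b) else 0)"
    by simp
  also have "\<dots> = (if K' = K \<and> G' = G \<and> b \<le> t then shiftcoef (of_nat c) a (t - b) else 0)"
    by (auto simp: sc_zero_lt P_def)
  finally show ?thesis .
qed

lemma lookup_fvec: "Poly_Mapping.lookup (fvec J r) (L, a) = (if distinct J \<and> L = sort J \<and> a = r then (-1) ^ ninv J else 0)"
  by (auto simp: fvec_def lookup_single when_def)

lemma lookup_img:
  "Poly_Mapping.lookup (img c K G t) (L, a)
     = (if distinct (K @ G) \<and> L = sort (K @ G) then shiftcoef (of_nat c) a t * (-1) ^ ninv (K @ G) else 0)"
proof -
  have "Poly_Mapping.lookup (img c K G t) (L, a)
      = (\<Sum>r\<le>t. if r = a then (if distinct (K @ G) \<and> L = sort (K @ G) then shiftcoef (of_nat c) a t * (-1) ^ ninv (K @ G) else 0) else 0)"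
    unfolding img_def lookup_sum lookup_map_mult lookup_fvec by (intro sum.cong refl) auto
  also have "\<dots> = (if a \<le> t then (if distinct (K @ G) \<and> L = sort (K @ G) then shiftcoef (of_nat c) a t * (-1) ^ ninv (K @ G) else 0) else 0)"
    by simp
  also have "\<dots> = (if distinct (K @ G) \<and> L = sort (K @ G) then shiftcoef (of_nat c) a t * (-1) ^ ninv (K @ G) else 0)"
    by (auto simp: sc_zero_lt)
  finally show ?thesis .
qed

lemma map_mult_zero: "Poly_Mapping.map ((*) (x::complex)) 0 = 0"
  by (rule poly_mapping_eqI) (simp add: lookup_map_mult)

lemma img_sum: "img c I Lam s = (if distinct (I @ Lam) then
    (\<Sum>r\<le>s. Poly_Mapping.single (sort (I @ Lam), r) (shiftcoef (of_nat c) r s * (-1) ^ ninv (I @ Lam))) else 0)"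
  unfolding img_def fvec_def by (cases "distinct (I @ Lam)") (simp_all only: if_True if_False map_single map_mult_zero sum.neutral_const mult_zero_right)


lemma finite_subs: "finite (subs n k)"
proof -
  have "subs n k \<subseteq> {xs. set xs \<subseteq> {1..n} \<and> length xs = k}" by (auto simp: subs_def)
  then show ?thesis by (rule finite_subset) (rule finite_lists_length_eq, simp)
qed

lemma Zform:
  "rho2 n c p (gen2 c I Lam s) ((K, a), (G, b)) = (if K \<in> subs n c \<and> G \<in> subs n p then
     ser_mult (ser_shift (of_nat c) (ser_mult (xmono a) (tminor K I))) (ser_mult (xmono b) (tminor G Lam)) s else 0)"
proof -
  define X1 where "X1 = ser_mult (xmono a) (tminor K I)"
  define X2 where "X2 = ser_mult (xmono b) (tminor G Lam)"
  have fin: "finite (Sigma {..s} (\<lambda>m. {..m}))" by simp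
  have "rho2 n c p (gen2 c I Lam s) ((K, a), (G, b))
      = (\<Sum>x\<in>Sigma {..s} (\<lambda>m. {..m}). yconst (shiftcoef (of_nat c) (snd x) (fst x))
           * rho1 n c (I, snd x) (K, a) * rho1 n p (Lam, s - fst x) (G, b))"
    unfolding gen2_sum by (subst rho2_sum_single[OF fin]) simp
  also have "\<dots> = (if K \<in> subs n c \<and> G \<in> subs n p then
      (\<Sum>x\<in>Sigma {..s} (\<lambda>m. {..m}). yconst (shiftcoef (of_nat c) (snd x) (fst x)) * X1 (snd x) * X2 (s - fst x)) else 0)"
    by (cases "K \<in> subs n c"; cases "G \<in> subs n p") (simp_all add: rho1_mono X1_def X2_def)
  also have "(\<Sum>x\<in>Sigma {..s} (\<lambda>m. {..m}). yconst (shiftcoef (of_nat c) (snd x) (fst x)) * X1 (snd x) * X2 (s - fst x))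
      = (\<Sum>m\<le>s. \<Sum>r\<le>m. yconst (shiftcoef (of_nat c) r m) * X1 r * X2 (s - m))"
    by (simp add: sum.Sigma case_prod_beta)
  also have "\<dots> = ser_mult (ser_shift (of_nat c) X1) X2 s"
    unfolding ser_mult_def ser_shift_def by (simp add: sum_distrib_right)
  finally show ?thesis by (simp add: X1_def X2_def)
qed

lemma ZD:
  "ser_mult (ser_shift c (ser_mult (xmono a) T1)) (ser_mult (xmono b) T2)
     = ser_mult (ser_mult (Sc c a) (xmono b)) (ser_mult (ser_shift c T1) T2)"
proof -
  have "ser_mult (ser_shift c (ser_mult (xmono a) T1)) (ser_mult (xmono b) T2)
      = ser_mult (Sc c a) (ser_mult (ser_mult (ser_shift c T1) (xmono b)) T2)"
    by (simp add: ser_shift_mult shift_mono ser_mult_assoc)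
  also have "\<dots> = ser_mult (Sc c a) (ser_mult (ser_mult (xmono b) (ser_shift c T1)) T2)"
    by (simp add: mono_comm)
  also have "\<dots> = ser_mult (ser_mult (Sc c a) (xmono b)) (ser_mult (ser_shift c T1) T2)"
    by (simp add: ser_mult_assoc)
  finally show ?thesis .
qed

definition Yser :: "nat \<Rightarrow> nat list \<Rightarrow> nat list \<Rightarrow> nat list \<Rightarrow> nat list \<Rightarrow> yser" where
  "Yser c I Lam K G = ser_mult (ser_shift (of_nat c) (tminor K I)) (tminor G Lam)"

lemma Zdecomp:
  "rho2 n c p (gen2 c I Lam s) j = (\<Sum>x\<in>subs n c \<times> subs n p. \<Sum>t\<le>s.
      yconst (Poly_Mapping.lookup (gen2 c (fst x) (snd x) t) j) * Yser c I Lam (fst x) (snd x) (s - t))"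
proof -
  obtain K a G b where j: "j = ((K, a), (G, b))" by (metis prod.collapse)
  define Y where "Y = Yser c I Lam K G"
  have "(\<Sum>x\<in>subs n c \<times> subs n p. \<Sum>t\<le>s.
      yconst (Poly_Mapping.lookup (gen2 c (fst x) (snd x) t) j) * Yser c I Lam (fst x) (snd x) (s - t))
    = (\<Sum>x\<in>subs n c \<times> subs n p. if x = (K, G) then
        (\<Sum>t\<le>s. yconst (if b \<le> t then shiftcoef (of_nat c) a (t - b) else 0) * Y (s - t)) else 0)"
    unfolding j lookup_gen2
  proof (rule sum.cong[OF refl])
    fix x assume "x \<in> subs n c \<times> subs n p"
    show "(\<Sum>t\<le>s. yconst (if K = fst x \<and> G = snd x \<and> b \<le> t then shiftcoef (of_nat c) a (t - b) else 0) *
            Yser c I Lam (fst x) (snd x) (s - t)) =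
         (if x = (K, G) then \<Sum>t\<le>s. yconst (if b \<le> t then shiftcoef (of_nat c) a (t - b) else 0) * Y (s - t) else 0)"
    proof (cases "x = (K, G)")
      case True
      then show ?thesis by (simp add: Y_def)
    next
      case False
      then have "\<not> (K = fst x \<and> G = snd x)" by auto
      then have cf: "\<And>t. (K = fst x \<and> G = snd x \<and> b \<le> t) = False" by blast
      show ?thesis using False by (simp only: cf if_False yconst_0 mult_zero_left sum.neutral_const)
    qed
  qed
  also have "\<dots> = (if K \<in> subs n c \<and> G \<in> subs n p then
        (\<Sum>t\<le>s. yconst (if b \<le> t then shiftcoef (of_nat c) a (t - b) else 0) * Y (s - t)) else 0)"
    by (simp add: finite_subs)
  also have "(\<Sum>t\<le>s. yconst (if b \<le> t then shiftcoef (of_nat c) a (t - b) else 0) * Y (s - t))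
      = ser_mult (ser_mult (Sc (of_nat c) a) (xmono b)) Y s"
    unfolding ser_mult_def[of _ Y] by (rule sum.cong[OF refl]) (simp add: ser_mult_mono_right Sc_def)
  finally show ?thesis unfolding j Zform ZD Y_def Yser_def by simp
qed




lemma splits_eq:
  assumes L: "L \<in> subs n (c + p)"
  shows "{x \<in> subs n c \<times> subs n p. distinct (fst x @ snd x) \<and> L = sort (fst x @ snd x)} = splits L c"
proof (intro equalityI subsetI)
  fix x assume x: "x \<in> {x \<in> subs n c \<times> subs n p. distinct (fst x @ snd x) \<and> L = sort (fst x @ snd x)}"
  obtain K G where x2: "x = (K, G)" by (cases x)
  have "set L = set (K @ G)" using x x2 by simp
  then show "x \<in> splits L c" using x x2 by (auto simp: splits_def subs_def)
next
  fix x assume x: "x \<in> splits L c"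
  obtain K G where x2: "x = (K, G)" by (cases x)
  have K: "sorted_wrt (<) K" and G: "sorted_wrt (<) G" and lK: "length K = c"
    and d: "distinct (K @ G)" and s: "set (K @ G) = set L" using x x2 by (auto simp: splits_def)
  have Ls: "sorted_wrt (<) L" and Ln: "set L \<subseteq> {1..n}" and Ll: "length L = c + p" using L by (auto simp: subs_def)
  have "length K + length G = length L"
    using distinct_card[OF d] s distinct_card[of L] Ls by (simp add: strict_sorted_iff)
  then have lG: "length G = p" using lK Ll by simp
  have "sort (K @ G) = L"
  proof (rule properties_for_sort)
    show "mset L = mset (K @ G)"
      using set_eq_iff_mset_eq_distinct[of L "K @ G"] d s Ls by (simp add: strict_sorted_iff)
    show "sorted L" using Ls by (simp add: strict_sorted_iff)
  qed
  then show "x \<in> {x \<in> subs n c \<times> subs n p. distinct (fst x @ snd x) \<and> L = sort (fst x @ snd x)}"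
    using x2 K G lK lG d s Ln by (auto simp: subs_def)
qed

lemma W_eq:
  assumes L: "L \<in> subs n (c + p)" and I: "length I = c" and Lam: "length Lam = p"
  shows "(\<lambda>q. \<Sum>x\<in>subs n c \<times> subs n p. if distinct (fst x @ snd x) \<and> L = sort (fst x @ snd x)
      then yconst ((-1) ^ ninv (fst x @ snd x)) * Yser c I Lam (fst x) (snd x) q else 0)
    = ser_shift (of_nat c) (tminor L (I @ Lam))"
proof -
  have Ls: "sorted_wrt (<) L" and Ll: "length L = c + p" using L by (auto simp: subs_def)
  have lap: "tminor L (I @ Lam) = (\<lambda>m. \<Sum>(K, G)\<in>splits L c.
           yconst ((-1) ^ ninv (K @ G)) * ser_mult (tminor K I) (ser_shift (- of_nat c) (tminor G Lam)) m)"
    using laplace[OF Ls, of I Lam] Ll I Lam by simp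
  have sh: "ser_shift (of_nat c) (ser_shift (- of_nat c) f) = f" for f
    by (simp add: ser_shift_shift ser_shift_zero)
  have "ser_shift (of_nat c) (tminor L (I @ Lam))
      = (\<lambda>q. \<Sum>(K, G)\<in>splits L c. yconst ((-1) ^ ninv (K @ G)) * Yser c I Lam K G q)"
    unfolding lap ser_shift_sum case_prod_beta ser_shift_scal ser_shift_mult sh Yser_def ..
  also have "\<dots> = (\<lambda>q. \<Sum>x\<in>{x \<in> subs n c \<times> subs n p. distinct (fst x @ snd x) \<and> L = sort (fst x @ snd x)}.
        yconst ((-1) ^ ninv (fst x @ snd x)) * Yser c I Lam (fst x) (snd x) q)"
    unfolding splits_eq[OF L] case_prod_beta ..
  also have "\<dots> = (\<lambda>q. \<Sum>x\<in>subs n c \<times> subs n p. if distinct (fst x @ snd x) \<and> L = sort (fst x @ snd x)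
      then yconst ((-1) ^ ninv (fst x @ snd x)) * Yser c I Lam (fst x) (snd x) q else 0)"
    by (simp add: sum.inter_filter finite_subs)
  finally show ?thesis by simp
qed


lemma sgnv_yconst: "sgnv N (x::fyang) = yconst ((-1) ^ N) * x"
  by (simp add: sgnv_def yconst_uminus)

lemma rho_zero: "rho n d 0 i = 0"
  by (cases i) (simp add: rho_def)

lemma yconst_sq: "yconst ((-1) ^ N) * (yconst ((-1) ^ N) * x) = x"
proof -
  have "yconst ((-1) ^ N) * (yconst ((-1) ^ N) * x) = yconst ((-1) ^ N * (-1) ^ N) * x"
    by (simp only: mult.assoc[symmetric] yconst_mult)
  also have "((-1::complex) ^ N * (-1) ^ N) = 1" by (simp add: power_mult_distrib[symmetric])
  finally show ?thesis by simp
qed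

theorem mainTheorem7:
  fixes n d p :: nat and M :: "cvec2 \<Rightarrow> cvec"
  assumes "1 \<le> p" and "p < d" and "d \<le> n"
    and M_add: "\<And>x y. M (x + y) = M x + M y"
    and M_smult: "\<And>c x. M (Poly_Mapping.map ((*) c) x) = Poly_Mapping.map ((*) c) (M x)"
    and M_mu: "\<And>I Lam s. I \<in> subs n (d - p) \<Longrightarrow> Lam \<in> subs n p \<Longrightarrow>
                 M (gen2 (d - p) I Lam s) = img (d - p) I Lam s"
  shows "\<forall>I\<in>subs n (d - p). \<forall>Lam\<in>subs n p. \<forall>s i.
           yeq n (tensor_map M (rho2 n (d - p) p (gen2 (d - p) I Lam s)) i)
                 (rho n d (img (d - p) I Lam s) i)"
proof (intro ballI allI)
  fix I Lam s i
  assume I: "I \<in> subs n (d - p)" and Lam: "Lam \<in> subs n p"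
  define c where "c = d - p"
  have dcp: "d = c + p" using assms(2) by (simp add: c_def)
  obtain L :: "nat list" and a :: nat where i: "i = (L, a)" by (cases i)
  define KG where "KG = subs n c \<times> subs n p"
  define Z where "Z = rho2 n c p (gen2 c I Lam s)"
  define Y where "Y x = Yser c I Lam (fst x) (snd x)" for x
  define U where "U = (\<Union>x\<in>KG. \<Union>t\<in>{..s}. Poly_Mapping.keys (gen2 c (fst x) (snd x) t))"
  define mj where "mj j = Poly_Mapping.lookup (M (Poly_Mapping.single j 1)) (L, a)" for j
  have finKG: "finite KG" by (simp add: KG_def finite_subs)
  have finU: "finite U" unfolding U_def using finKG by simp
  have keysU: "Poly_Mapping.keys (gen2 c (fst x) (snd x) t) \<subseteq> U" if "x \<in> KG" "t \<le> s" for x t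
    using that unfolding U_def by blast
  have Zj: "Z j = (\<Sum>x\<in>KG. \<Sum>t\<le>s. yconst (Poly_Mapping.lookup (gen2 c (fst x) (snd x) t) j) * Y x (s - t))" for j
    unfolding Z_def KG_def Y_def by (rule Zdecomp)
  have Z0: "Z j = 0" if "j \<notin> U" for j
  proof -
    have "Poly_Mapping.lookup (gen2 c (fst x) (snd x) t) j = 0" if "x \<in> KG" "t \<le> s" for x t
      using keysU[OF that] \<open>j \<notin> U\<close> by (auto simp: in_keys_iff)
    then show ?thesis unfolding Zj by simp
  qed
  have LHS: "tensor_map M Z (L, a) = ser_mult (Sc (of_nat c) a)
      (\<lambda>q. \<Sum>x\<in>KG. if distinct (fst x @ snd x) \<and> L = sort (fst x @ snd x)
         then yconst ((-1) ^ ninv (fst x @ snd x)) * Y x q else 0) s"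
  proof -
    have "tensor_map M Z (L, a) = (\<Sum>j\<in>U. yconst (mj j) * Z j)"
      unfolding tensor_map_def mj_def
      by (rule sum.mono_neutral_left) (use finU Z0 in auto)
    also have "\<dots> = (\<Sum>j\<in>U. \<Sum>x\<in>KG. \<Sum>t\<le>s. yconst (Poly_Mapping.lookup (gen2 c (fst x) (snd x) t) j * mj j) * Y x (s - t))"
      unfolding Zj by (simp add: sum_distrib_left yconst_swap mult.assoc[symmetric] yconst_mult[symmetric] mult.commute)
    also have "\<dots> = (\<Sum>x\<in>KG. \<Sum>t\<le>s. \<Sum>j\<in>U. yconst (Poly_Mapping.lookup (gen2 c (fst x) (snd x) t) j * mj j) * Y x (s - t))"
      by (simp only: sum.swap[of _ U] sum.swap[of _ U "{..s}"])
    also have "\<dots> = (\<Sum>x\<in>KG. \<Sum>t\<le>s. yconst (Poly_Mapping.lookup (M (gen2 c (fst x) (snd x) t)) (L, a)) * Y x (s - t))"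
    proof (intro sum.cong refl)
      fix x t assume x: "x \<in> KG" and t: "t \<in> {..s}"
      have "Poly_Mapping.lookup (M (gen2 c (fst x) (snd x) t)) (L, a)
          = (\<Sum>j\<in>U. Poly_Mapping.lookup (gen2 c (fst x) (snd x) t) j * mj j)"
        unfolding mj_def by (rule M_lookup[OF M_add M_smult finU keysU[OF x]]) (use t in simp)
      then show "(\<Sum>j\<in>U. yconst (Poly_Mapping.lookup (gen2 c (fst x) (snd x) t) j * mj j) * Y x (s - t))
          = yconst (Poly_Mapping.lookup (M (gen2 c (fst x) (snd x) t)) (L, a)) * Y x (s - t)"
        by (simp add: yconst_sum sum_distrib_right)
    qed
    also have "\<dots> = (\<Sum>x\<in>KG. \<Sum>t\<le>s. yconst (Poly_Mapping.lookup (img c (fst x) (snd x) t) (L, a)) * Y x (s - t))"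
    proof (intro sum.cong refl)
      fix x t assume x: "x \<in> KG"
      have "M (gen2 c (fst x) (snd x) t) = img c (fst x) (snd x) t"
        using M_mu[of "fst x" "snd x" t] x by (auto simp: KG_def c_def)
      then show "yconst (Poly_Mapping.lookup (M (gen2 c (fst x) (snd x) t)) (L, a)) * Y x (s - t)
          = yconst (Poly_Mapping.lookup (img c (fst x) (snd x) t) (L, a)) * Y x (s - t)" by simp
    qed
    also have "\<dots> = (\<Sum>x\<in>KG. \<Sum>t\<le>s. yconst (shiftcoef (of_nat c) a t) *
        (if distinct (fst x @ snd x) \<and> L = sort (fst x @ snd x) then yconst ((-1) ^ ninv (fst x @ snd x)) * Y x (s - t) else 0))"
      by (intro sum.cong refl) (simp add: lookup_img yconst_mult mult.assoc)
    also have "\<dots> = (\<Sum>t\<le>s. yconst (shiftcoef (of_nat c) a t) * (\<Sum>x\<in>KG.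
        (if distinct (fst x @ snd x) \<and> L = sort (fst x @ snd x) then yconst ((-1) ^ ninv (fst x @ snd x)) * Y x (s - t) else 0)))"
      by (simp only: sum_distrib_left sum.swap[of _ KG])
    also have "\<dots> = ser_mult (Sc (of_nat c) a)
      (\<lambda>q. \<Sum>x\<in>KG. if distinct (fst x @ snd x) \<and> L = sort (fst x @ snd x)
         then yconst ((-1) ^ ninv (fst x @ snd x)) * Y x q else 0) s"
      by (simp add: ser_mult_def Sc_def)
    finally show ?thesis .
  qed
  define eps where "eps = ((-1::complex) ^ ninv (I @ Lam))"
  define T where "T = tminor L (sort (I @ Lam))"
  define R where "R q = (if distinct (I @ Lam) \<and> L \<in> subs n d then yconst eps * ser_shift (of_nat c) T q else 0)" for q
  define W where "W q = (\<Sum>x\<in>KG. if distinct (fst x @ snd x) \<and> L = sort (fst x @ snd x)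
         then yconst ((-1) ^ ninv (fst x @ snd x)) * Y x q else 0)" for q
  have RHS: "rho n d (img c I Lam s) (L, a) = ser_mult (Sc (of_nat c) a) R s"
  proof (cases "distinct (I @ Lam)")
    case True
    have "rho n d (img c I Lam s) (L, a)
        = (\<Sum>r\<le>s. yconst (shiftcoef (of_nat c) r s * eps) * rho1 n d (sort (I @ Lam), r) (L, a))"
      unfolding img_sum using True by (simp add: rho_sum_single eps_def)
    also have "\<dots> = (if L \<in> subs n d then (\<Sum>r\<le>s. yconst (shiftcoef (of_nat c) r s * eps) * ser_mult (xmono a) T r) else 0)"
      by (simp add: rho1_mono T_def)
    also have "\<dots> = ser_mult (Sc (of_nat c) a) R s"
    proof (cases "L \<in> subs n d")
      case True2: True
      have "(\<Sum>r\<le>s. yconst (shiftcoef (of_nat c) r s * eps) * ser_mult (xmono a) T r)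
          = yconst eps * ser_shift (of_nat c) (ser_mult (xmono a) T) s"
        unfolding ser_shift_def by (simp add: sum_distrib_left yconst_mult yconst_swap mult.assoc[symmetric] mult.commute)
      also have "\<dots> = ser_mult (Sc (of_nat c) a) R s"
      proof -
        have R_eq: "R = (\<lambda>q. yconst eps * ser_shift (of_nat c) T q)"
          using True True2 by (simp add: R_def fun_eq_iff)
        show ?thesis unfolding ser_shift_mult shift_mono R_eq ser_mult_scal_right ..
      qed
      finally show ?thesis using True2 by simp
    next
      case False
      then show ?thesis by (simp add: R_def ser_mult_def)
    qed
    finally show ?thesis .
  next
    case False
    have img0: "img c I Lam s = 0" by (simp only: img_sum if_not_P[OF False])
    have R0: "R q = 0" for q unfolding R_def using False by (simp only: de_Morgan_conj simp_thms if_False) 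
    show ?thesis by (simp add: img0 rho_zero R0 ser_mult_def)
  qed
  have WR: "W q - R q \<in> yideal n" for q
  proof (cases "L \<in> subs n d")
    case False
    have "W q = 0"
      unfolding W_def
    proof (rule sum.neutral, rule ballI)
      fix x assume x: "x \<in> KG"
      show "(if distinct (fst x @ snd x) \<and> L = sort (fst x @ snd x)
         then yconst ((-1) ^ ninv (fst x @ snd x)) * Y x q else 0) = 0"
      proof (cases "distinct (fst x @ snd x) \<and> L = sort (fst x @ snd x)")
        case True
        then have "L \<in> subs n d" using x dcp by (auto simp: KG_def subs_def strict_sorted_iff)
        then show ?thesis using False by simp
      next
        case False
        then show ?thesis by (simp only: if_not_P[OF False] if_False)
      qed
    qed
    then show ?thesis using False by (simp add: R_def)
  next
    case Ld: True
    have Ls: "sorted_wrt (<) L" and Ln: "set L \<subseteq> {1..n}" and Ll: "length L = d" using Ld by (auto simp: subs_def)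
    have lI: "length I = c" and lLam: "length Lam = p" using I Lam by (auto simp: subs_def c_def)
    have sIL: "set (I @ Lam) \<subseteq> {1..n}" using I Lam by (auto simp: subs_def)
    have lIL: "length (I @ Lam) = length L" using lI lLam Ll dcp by simp
    have Weq: "W = ser_shift (of_nat c) (tminor L (I @ Lam))"
      unfolding W_def Y_def KG_def using W_eq[of L n c p I Lam] Ld dcp lI lLam by (simp add: fun_eq_iff)
    show ?thesis
    proof (cases "distinct (I @ Lam)")
      case True
      define D where "D m = T m - sgnv (ninv (I @ Lam)) (tminor L (I @ Lam) m)" for m
      have DI: "D m \<in> yideal n" for m
        unfolding D_def T_def by (rule col_sort[OF Ls Ln lIL sIL])
      have "ser_shift (of_nat c) D q = ser_shift (of_nat c) T q - yconst eps * ser_shift (of_nat c) (tminor L (I @ Lam)) q"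
        unfolding D_def sgnv_yconst eps_def by (simp add: ser_shift_diff ser_shift_scal)
      then have "W q - R q = - (yconst eps * ser_shift (of_nat c) D q)"
        using True Ld by (simp add: R_def Weq right_diff_distrib yconst_sq eps_def)
      also have "\<dots> \<in> yideal n" by (intro yi_uminus yi_lmult ser_shift_ideal DI)
      finally show ?thesis .
    next
      case False
      have "tminor L (I @ Lam) m \<in> yideal n" for m by (rule col_zero[OF Ls Ln lIL sIL False])
      then have "W q \<in> yideal n" unfolding Weq by (rule ser_shift_ideal)
      moreover have "R q = 0" unfolding R_def using False by (simp only: de_Morgan_conj simp_thms if_False)
      ultimately show ?thesis by simp
    qed
  qed
  have "tensor_map M Z (L, a) - rho n d (img c I Lam s) (L, a) = ser_mult (Sc (of_nat c) a) (\<lambda>q. W q - R q) s"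
    unfolding LHS RHS ser_mult_diff_right W_def ..
  also have "\<dots> \<in> yideal n" by (rule ser_mult_ideal_right) (rule WR)
  finally show "yeq n (tensor_map M (rho2 n (d - p) p (gen2 (d - p) I Lam s)) i) (rho n d (img (d - p) I Lam s) i)"
    by (simp add: yeq_def i Z_def c_def)
qed


end
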